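(* Consider the cache-aided packet-erasure broadcast network described in the context. For $t\in\{0,1,\dots,K_\mathrm{w}\}$ define \[ R_{t,\mathrm{sep}}:=F\left(\frac{K_\mathrm{w}-t}{(t+1)(1-\delta_\mathrm{w})}+\frac{K_\mathrm{s}}{1-\delta_\mathrm{s}}\right)^{-1},\qquad M_{t,\mathrm{sep}}:=D\frac{t}{K_\mathrm{w}}R_{t,\mathrm{sep}}. \] Then every point of the upper convex hull of $\{(M_{t,\mathrm{sep}},R_{t,\mathrm{sep}}):t=0,\dots,K_\mathrm{w}\}$ is achievable; that is, for every $M\in[0,M_{K_\mathrm{w},\mathrm{sep}}]$, \[ C(M)\ge\max\Big\{\sum_{t=0}^{K_\mathrm{w}}\lambda_tR_{t,\mathrm{sep}}:\lambda_t\ge0,\ \sum_t\lambda_t=1,\ \sum_t\lambda_tM_{t,\mathrm{sep}}=M\Big\}. \]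
   Context: Setting (packet-erasure broadcast channel with receiver caches). Let $K_\mathrm{w},K_\mathrm{s}\ge1$ be integers, $K=K_\mathrm{w}+K_\mathrm{s}$, $D\ge K$ an integer, $F$ a positive integer, and $0<\delta_\mathrm{s}\le\delta_\mathrm{w}<1$. The channel is memoryless with input alphabet $\mathcal X=\{0,1\}^F$; receiver $k\in\{1,\dots,K\}$ observes $Y_k=x$ with probability $1-\delta_k$ and an erasure symbol $\Delta$ with probability $\delta_k$. Receivers $1,\dots,K_\mathrm{w}$ are weak ($\delta_k=\delta_\mathrm{w}$), receivers $K_\mathrm{w}+1,\dots,K$ are strong ($\delta_k=\delta_\mathrm{s}$). A library of $D$ independent messages $W_1,\dots,W_D$, each uniform on $\{1,\dots,\lfloor 2^{nR}\rfloor\}$. Caching phase (demands unknown): weak receiver $i$ stores $V_i=g_i(W_1,\dots,W_D)\in\{1,\dots,\lfloor2^{nM}\rfloor\}$; strong receivers have no cache. Delivery: an arbitrary demand vector $\mathbf d\in\{1,\dots,D\}^K$ is known to all; transmitter sends $X^n=f_{\mathbf d}(W_1,\dots,W_D)$; weak receiver $i$ decodes from $(Y_i^n,V_i)$, strong receiver $j$ from $Y_j^n$, each aiming at $W_{d_k}$. $(R,M)$ is achievable if for every $\epsilon>0$ there exist $n$ and such functions with worst-case (over all demand vectors) probability that some receiver errs $<\epsilon$. $C(M)$ is the supremum of achievable $R$ for memory $M$. *)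

theory Defs
  imports "HOL-Probability.Probability"
begin

text \<open>Receivers are indexed 1..K with K = Kw + Ks; receivers 1..Kw are weak,
  Kw+1..K are strong.  A channel symbol is a bit list of length F; an output
  symbol is an option (None = erasure).\<close>

definition erasure_prob :: "nat \<Rightarrow> real \<Rightarrow> real \<Rightarrow> nat \<Rightarrow> real" where
  "erasure_prob Kw dw ds k = (if k \<le> Kw then dw else ds)"

text \<open>Per-channel-use law of the set of erased receivers (independent of the input,
  i.i.d. over time); only the marginals are prescribed by the model.\<close>
definition valid_erasure_law :: "nat \<Rightarrow> nat \<Rightarrow> real \<Rightarrow> real \<Rightarrow> nat set pmf \<Rightarrow> bool" where
  "valid_erasure_law Kw Ks dw ds E \<longleftrightarrow>
     set_pmf E \<subseteq> Pow {1..Kw+Ks} \<and>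
     (\<forall>k\<in>{1..Kw+Ks}. measure_pmf.prob E {S. k \<in> S} = erasure_prob Kw dw ds k)"

definition num_msgs :: "nat \<Rightarrow> real \<Rightarrow> nat" where
  "num_msgs n R = nat \<lfloor>2 powr (real n * R)\<rfloor>"

definition msg_set :: "nat \<Rightarrow> nat \<Rightarrow> real \<Rightarrow> (nat \<Rightarrow> nat) set" where
  "msg_set D n R = PiE {1..D} (\<lambda>_. {1..num_msgs n R})"

definition demand_set :: "nat \<Rightarrow> nat \<Rightarrow> (nat \<Rightarrow> nat) set" where
  "demand_set K D = PiE {1..K} (\<lambda>_. {1..D})"

definition channel_out :: "nat \<Rightarrow> (nat \<Rightarrow> nat set) \<Rightarrow> (nat \<Rightarrow> bool list) \<Rightarrow> nat
    \<Rightarrow> (nat \<Rightarrow> bool list option)" where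
  "channel_out n e x k = (\<lambda>t. if t < n \<and> k \<notin> e t then Some (x t) else None)"

text \<open>Probability (uniform messages, memoryless erasures) that some receiver errs
  under demand vector d.  g i w: cache of weak receiver i;
  f d w: transmitted sequence; phi d k y v: decoder of receiver k
  (strong receivers are given the constant 0 instead of a cache).\<close>
definition error_prob ::
  "nat \<Rightarrow> nat \<Rightarrow> nat \<Rightarrow> nat set pmf \<Rightarrow> nat \<Rightarrow> real
   \<Rightarrow> (nat \<Rightarrow> (nat \<Rightarrow> nat) \<Rightarrow> nat)
   \<Rightarrow> ((nat \<Rightarrow> nat) \<Rightarrow> (nat \<Rightarrow> nat) \<Rightarrow> nat \<Rightarrow> bool list)
   \<Rightarrow> ((nat \<Rightarrow> nat) \<Rightarrow> nat \<Rightarrow> (nat \<Rightarrow> bool list option) \<Rightarrow> nat \<Rightarrow> nat)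
   \<Rightarrow> (nat \<Rightarrow> nat) \<Rightarrow> real" where
  "error_prob Kw Ks D E n R g f phi d =
     (\<Sum>w\<in>msg_set D n R. \<Sum>e\<in>PiE {0..<n} (\<lambda>_. Pow {1..Kw+Ks}).
        (\<Prod>t<n. pmf E (e t)) *
        (if (\<exists>k\<in>{1..Kw+Ks}.
               phi d k (channel_out n e (f d w) k) (if k \<le> Kw then g k w else 0) \<noteq> w (d k))
         then 1 else 0))
     / real (card (msg_set D n R))"

definition achievable ::
  "nat \<Rightarrow> nat \<Rightarrow> nat \<Rightarrow> nat \<Rightarrow> nat set pmf \<Rightarrow> real \<Rightarrow> real \<Rightarrow> bool" where
  "achievable Kw Ks D F E R M \<longleftrightarrow> 0 \<le> R \<and> 0 \<le> M \<and>
     (\<forall>\<epsilon>>0. \<exists>n>0. \<exists>g f phi.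
        (\<forall>i\<in>{1..Kw}. \<forall>w\<in>msg_set D n R. g i w \<in> {1..num_msgs n M}) \<and>
        (\<forall>d\<in>demand_set (Kw+Ks) D. \<forall>w\<in>msg_set D n R. \<forall>t<n. length (f d w t) = F) \<and>
        (\<forall>d\<in>demand_set (Kw+Ks) D. error_prob Kw Ks D E n R g f phi d < \<epsilon>))"

definition capacity :: "nat \<Rightarrow> nat \<Rightarrow> nat \<Rightarrow> nat \<Rightarrow> nat set pmf \<Rightarrow> real \<Rightarrow> ereal" where
  "capacity Kw Ks D F E M = Sup {ereal R | R. achievable Kw Ks D F E R M}"

definition R_sep :: "nat \<Rightarrow> nat \<Rightarrow> nat \<Rightarrow> real \<Rightarrow> real \<Rightarrow> nat \<Rightarrow> real" where
  "R_sep Kw Ks F dw ds t =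
     real F / ((real Kw - real t) / ((real t + 1) * (1 - dw)) + real Ks / (1 - ds))"

definition M_sep :: "nat \<Rightarrow> nat \<Rightarrow> nat \<Rightarrow> nat \<Rightarrow> real \<Rightarrow> real \<Rightarrow> nat \<Rightarrow> real" where
  "M_sep Kw Ks D F dw ds t = real D * (real t / real Kw) * R_sep Kw Ks F dw ds t"

end

theory Submission
  imports Defs
begin

lemma pmf_sum_one:
  assumes "set_pmf E \<subseteq> A" "finite A"
  shows "(\<Sum>S\<in>A. pmf E S) = 1"
proof -
  have "(\<Sum>S\<in>A. pmf E S) = measure_pmf.prob E A" using assms by (simp add: measure_measure_pmf_finite)
  also have "\<dots> = measure_pmf.prob E (A \<inter> set_pmf E)" by (simp add: measure_Int_set_pmf)
  also have "A \<inter> set_pmf E = set_pmf E" using assms by auto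
  finally show ?thesis by (simp add: measure_pmf.prob_eq_1 AE_measure_pmf)
qed

lemma erasure_marg:
  assumes "valid_erasure_law Kw Ks dw ds E" "k \<in> {1..Kw+Ks}"
  shows "(\<Sum>S\<in>Pow {1..Kw+Ks}. pmf E S * (if k \<in> S then 1 else z))
       = erasure_prob Kw dw ds k + (1 - erasure_prob Kw dw ds k) * z"
proof -
  let ?A = "Pow {1..Kw+Ks}"
  have sub: "set_pmf E \<subseteq> ?A" using assms(1) unfolding valid_erasure_law_def by auto
  have h1: "(\<Sum>S\<in>?A. pmf E S) = 1" by (rule pmf_sum_one[OF sub]) auto
  have "measure_pmf.prob E {S. k \<in> S} = erasure_prob Kw dw ds k"
    using assms unfolding valid_erasure_law_def by auto
  moreover have "measure_pmf.prob E {S. k \<in> S} = measure_pmf.prob E ({S\<in>?A. k \<in> S})"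
  proof -
    have "measure_pmf.prob E {S. k \<in> S} = measure_pmf.prob E ({S. k \<in> S} \<inter> set_pmf E)"
      by (simp add: measure_Int_set_pmf)
    also have "{S. k \<in> S} \<inter> set_pmf E = {S\<in>?A. k \<in> S} \<inter> set_pmf E" using sub by auto
    finally show ?thesis by (simp add: measure_Int_set_pmf)
  qed
  moreover have "measure_pmf.prob E ({S\<in>?A. k \<in> S}) = (\<Sum>S\<in>{S\<in>?A. k \<in> S}. pmf E S)"
    by (simp add: measure_measure_pmf_finite)
  ultimately have p: "(\<Sum>S\<in>{S\<in>?A. k \<in> S}. pmf E S) = erasure_prob Kw dw ds k" by simp
  have "(\<Sum>S\<in>?A. pmf E S * (if k \<in> S then 1 else z))
      = (\<Sum>S\<in>?A. (if k \<in> S then pmf E S else 0)) + z * (\<Sum>S\<in>?A. pmf E S - (if k \<in> S then pmf E S else 0))"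
    by (simp add: sum_distrib_left sum.distrib[symmetric] algebra_simps sum_subtractf[symmetric] if_distrib cong: if_cong)
  also have "(\<Sum>S\<in>?A. (if k \<in> S then pmf E S else 0)) = (\<Sum>S\<in>{S\<in>?A. k \<in> S}. pmf E S)"
    using sum.inter_filter[of ?A "pmf E" "\<lambda>S. k\<in>S"] by simp
  also have "(\<Sum>S\<in>?A. pmf E S - (if k \<in> S then pmf E S else 0)) = 1 - erasure_prob Kw dw ds k"
    using sum.inter_filter[of ?A "pmf E" "\<lambda>S. k\<in>S"] using h1 p by (simp add: sum_subtractf)
  finally show ?thesis using p by (simp add: algebra_simps)
qed

lemma erasure_prod:
  fixes n :: nat and z :: real
  assumes "valid_erasure_law Kw Ks dw ds E" "k \<in> {1..Kw+Ks}" "I \<subseteq> {0..<n}"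
  shows "(\<Sum>e\<in>PiE {0..<n} (\<lambda>_. Pow {1..Kw+Ks}). (\<Prod>t<n. pmf E (e t)) *
            (\<Prod>t\<in>I. if k \<in> e t then 1 else z))
       = (erasure_prob Kw dw ds k + (1 - erasure_prob Kw dw ds k) * z) ^ card I"
proof -
  let ?A = "Pow {1..Kw+Ks}"
  let ?a = "erasure_prob Kw dw ds k + (1 - erasure_prob Kw dw ds k) * z"
  have fI: "finite I" by (rule finite_subset[OF assms(3)]) simp
  have "\<And>e. (\<Prod>t<n. pmf E (e t)) * (\<Prod>t\<in>I. if k \<in> e t then 1 else z)
         = (\<Prod>t\<in>{0..<n}. pmf E (e t) * (if t \<in> I then (if k \<in> e t then 1 else z) else 1))"
  proof -
    fix e :: "nat \<Rightarrow> nat set"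
    have "(\<Prod>t\<in>I. if k \<in> e t then 1 else z) = (\<Prod>t\<in>{0..<n}. (if t \<in> I then (if k \<in> e t then 1 else z) else 1))"
      using prod.inter_restrict[where A="{0..<n}" and g="\<lambda>t. if k \<in> e t then 1 else z" and B=I] assms(3)
      by (simp add: Int_absorb1)
    then show "?thesis e" by (simp add: prod.distrib[symmetric] atLeast0LessThan)
  qed
  then have "(\<Sum>e\<in>PiE {0..<n} (\<lambda>_. ?A). (\<Prod>t<n. pmf E (e t)) * (\<Prod>t\<in>I. if k \<in> e t then 1 else z))
     = (\<Sum>e\<in>PiE {0..<n} (\<lambda>_. ?A). \<Prod>t\<in>{0..<n}. pmf E (e t) * (if t \<in> I then (if k \<in> e t then 1 else z) else 1))"
    by simp
  also have "\<dots> = (\<Prod>t\<in>{0..<n}. \<Sum>S\<in>?A. pmf E S * (if t \<in> I then (if k \<in> S then 1 else z) else 1))"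
    by (rule prod_sum_PiE[symmetric]) auto
  also have "\<dots> = (\<Prod>t\<in>{0..<n}. if t \<in> I then ?a else 1)"
  proof (rule prod.cong)
    fix t assume "t \<in> {0..<n}"
    show "(\<Sum>S\<in>?A. pmf E S * (if t \<in> I then (if k \<in> S then 1 else z) else 1)) = (if t \<in> I then ?a else 1)"
    proof (cases "t \<in> I")
      case True then show ?thesis using erasure_marg[OF assms(1,2)] by simp
    next
      case False
      have "set_pmf E \<subseteq> ?A" using assms(1) unfolding valid_erasure_law_def by auto
      then have "(\<Sum>S\<in>?A. pmf E S) = 1" by (rule pmf_sum_one) auto
      then show ?thesis using False by simp
    qed
  qed simp
  also have "\<dots> = ?a ^ card I"
    using prod.inter_restrict[where A="{0..<n}" and g="\<lambda>t. ?a" and B=I, symmetric] assms(3)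
    by (simp add: Int_absorb1)
  finally show ?thesis .
qed


locale sess =
  fixes Kw Ks D :: nat and dw ds R :: real and E :: "nat set pmf" and n F :: nat
    and g :: "nat \<Rightarrow> (nat\<Rightarrow>nat) \<Rightarrow> nat" and dd :: "nat \<Rightarrow> nat"
    and J :: "'j set" and Sr :: "'j \<Rightarrow> nat set" and Q :: "'j \<Rightarrow> nat" and I :: "'j \<Rightarrow> nat set"
    and msg :: "'j \<Rightarrow> (nat\<Rightarrow>nat) \<Rightarrow> (nat\<Rightarrow>nat)" and side :: "'j \<Rightarrow> nat \<Rightarrow> nat \<Rightarrow> (nat\<Rightarrow>nat)"
    and recon :: "nat \<Rightarrow> nat \<Rightarrow> ('j \<Rightarrow> nat) \<Rightarrow> nat"
  assumes law: "valid_erasure_law Kw Ks dw ds E"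
    and finJ: "finite J" and finS: "\<And>j. j \<in> J \<Longrightarrow> finite (Sr j)"
    and SrK: "\<And>j. j \<in> J \<Longrightarrow> Sr j \<subseteq> {1..Kw+Ks}"
    and Isub: "\<And>j. j \<in> J \<Longrightarrow> I j \<subseteq> {0..<n}"
    and Idisj: "\<And>j1 j2. j1 \<in> J \<Longrightarrow> j2 \<in> J \<Longrightarrow> j1 \<noteq> j2 \<Longrightarrow> I j1 \<inter> I j2 = {}"
    and msgP: "\<And>j w. j \<in> J \<Longrightarrow> w \<in> msg_set D n R \<Longrightarrow> msg j w \<in> PiE (Sr j) (\<lambda>_. {..<Q j})"
    and sideP: "\<And>j k w. j \<in> J \<Longrightarrow> k \<in> Sr j \<Longrightarrow> w \<in> msg_set D n R \<Longrightarrow>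
        (side j k (if k \<le> Kw then g k w else 0))(k := msg j w k) = msg j w"
    and reconP: "\<And>k w. k \<in> {1..Kw+Ks} \<Longrightarrow> w \<in> msg_set D n R \<Longrightarrow>
        recon k (if k \<le> Kw then g k w else 0) (\<lambda>j. if j \<in> J \<and> k \<in> Sr j then msg j w k else 0) = w (dd k)"
begin

abbreviation "W \<equiv> msg_set D n R"
abbreviation "K \<equiv> Kw + Ks"
definition "Bits = {xs :: bool list. length xs = F}"
definition "jof t = (THE j. j \<in> J \<and> t \<in> I j)"
definition "U t = (if \<exists>j\<in>J. t \<in> I j then PiE (Sr (jof t)) (\<lambda>_. {..<Q (jof t)}) else {})"
definition "CB = PiE {0..<n} (\<lambda>t. PiE (U t) (\<lambda>_. Bits))"
definition "fh h w t = (if t < n \<and> (\<exists>j\<in>J. t \<in> I j) then h t (msg (jof t) w) else replicate F False)"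
definition "okr h k v y j r = (\<forall>t\<in>I j. y t \<noteq> None \<longrightarrow> y t = Some (h t ((side j k v)(k := r))))"
definition "dec h k v y j = (if \<exists>!r. r < Q j \<and> okr h k v y j r then THE r. r < Q j \<and> okr h k v y j r else 0)"
definition "ph h k y v = recon k v (\<lambda>j. if j \<in> J \<and> k \<in> Sr j then dec h k v y j else 0)"
definition "agree h j k w e r = (\<forall>t\<in>I j. k \<notin> e t \<longrightarrow> h t ((msg j w)(k := r)) = h t (msg j w))"

lemma jof_eq: "j \<in> J \<Longrightarrow> t \<in> I j \<Longrightarrow> jof t = j"
  unfolding jof_def using Idisj by (intro the_equality) blast+

lemma U_eq: "j \<in> J \<Longrightarrow> t \<in> I j \<Longrightarrow> U t = PiE (Sr j) (\<lambda>_. {..<Q j})"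
  unfolding U_def using jof_eq by auto

lemma finite_U: "finite (U t)"
proof (cases "\<exists>j\<in>J. t \<in> I j")
  case True
  then obtain j where "j \<in> J" "t \<in> I j" by blast
  then show ?thesis using U_eq finS by (auto intro!: finite_PiE)
qed (simp add: U_def)
  
lemma finite_Bits: "finite Bits"
  unfolding Bits_def using finite_lists_length_eq[of "UNIV :: bool set" F] by simp

lemma card_Bits: "card Bits = 2 ^ F"
  unfolding Bits_def using card_lists_length_eq[of "UNIV :: bool set" F] by simp

lemma fh_len: "h \<in> CB \<Longrightarrow> w \<in> W \<Longrightarrow> t < n \<Longrightarrow> length (fh h w t) = F"
proof -
  assume h: "h \<in> CB" and w: "w \<in> W" and t: "t < n"
  show ?thesis
  proof (cases "\<exists>j\<in>J. t \<in> I j")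
    case True
    then obtain j where j: "j \<in> J" "t \<in> I j" by blast
    have "msg j w \<in> U t" using U_eq[OF j] msgP[OF j(1) w] by simp
    moreover have "h t \<in> PiE (U t) (\<lambda>_. Bits)" using h t unfolding CB_def by auto
    ultimately have "h t (msg j w) \<in> Bits" by auto
    then show ?thesis using True t jof_eq[OF j] j unfolding fh_def Bits_def by auto
  qed (simp add: fh_def)
qed

lemma okr_iff:
  assumes j: "j \<in> J" and k: "k \<in> Sr j" and w: "w \<in> W"
  shows "okr h k (if k \<le> Kw then g k w else 0) (channel_out n e (fh h w) k) j r
     \<longleftrightarrow> agree h j k w e r"
proof -
  have s: "(side j k (if k \<le> Kw then g k w else 0))(k := r) = (msg j w)(k := r)"
    using sideP[OF j k w] by (metis fun_upd_upd)
  have "\<And>t. t \<in> I j \<Longrightarrow> t < n \<and> fh h w t = h t (msg j w)"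
    using Isub[OF j] jof_eq[OF j] j unfolding fh_def by auto
  then show ?thesis unfolding okr_def agree_def channel_out_def s by auto
qed

lemma dec_correct:
  assumes j: "j \<in> J" and k: "k \<in> Sr j" and w: "w \<in> W"
    and no: "\<forall>r\<in>{..<Q j} - {msg j w k}. \<not> agree h j k w e r"
  shows "dec h k (if k \<le> Kw then g k w else 0) (channel_out n e (fh h w) k) j = msg j w k"
proof -
  let ?ok = "okr h k (if k \<le> Kw then g k w else 0) (channel_out n e (fh h w) k) j"
  have r0: "msg j w k < Q j" using msgP[OF j w] k by auto
  have a0: "agree h j k w e (msg j w k)" unfolding agree_def by simp
  have u: "\<exists>!r. r < Q j \<and> ?ok r"
    using r0 a0 no okr_iff[OF j k w] by blast
  then have "(THE r. r < Q j \<and> ?ok r) = msg j w k"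
    using r0 a0 okr_iff[OF j k w] by (intro the1_equality) auto
  then show ?thesis using u unfolding dec_def by simp
qed

lemma err_le:
  assumes w: "w \<in> W"
  shows "(if \<exists>k\<in>{1..K}. ph h k (channel_out n e (fh h w) k) (if k \<le> Kw then g k w else 0) \<noteq> w (dd k) then 1 else 0)
    \<le> (\<Sum>k\<in>{1..K}. \<Sum>j\<in>{j\<in>J. k \<in> Sr j}. min 1 (\<Sum>r\<in>{..<Q j} - {msg j w k}. if agree h j k w e r then 1 else (0::real)))"
    (is "?L \<le> ?R")
proof (cases "\<exists>k\<in>{1..K}. ph h k (channel_out n e (fh h w) k) (if k \<le> Kw then g k w else 0) \<noteq> w (dd k)")
  case False
  then have "?L = 0" by simp
  also have "0 \<le> ?R" by (intro sum_nonneg) (auto intro!: sum_nonneg split: if_splits)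
  finally show ?thesis .
next
  case True
  then obtain k where k: "k \<in> {1..K}" and bad: "ph h k (channel_out n e (fh h w) k) (if k \<le> Kw then g k w else 0) \<noteq> w (dd k)"
    by blast
  have "\<exists>j\<in>J. k \<in> Sr j \<and> (\<exists>r\<in>{..<Q j} - {msg j w k}. agree h j k w e r)"
  proof (rule ccontr)
    assume "\<not> ?thesis"
    then have "\<And>j. j \<in> J \<Longrightarrow> k \<in> Sr j \<Longrightarrow> dec h k (if k \<le> Kw then g k w else 0) (channel_out n e (fh h w) k) j = msg j w k"
      using dec_correct[OF _ _ w] by blast
    then have "(\<lambda>j. if j \<in> J \<and> k \<in> Sr j then dec h k (if k \<le> Kw then g k w else 0) (channel_out n e (fh h w) k) j else 0)
      = (\<lambda>j. if j \<in> J \<and> k \<in> Sr j then msg j w k else 0)" by auto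
    then show False using bad reconP[OF k w] unfolding ph_def by simp
  qed
  then obtain j r where j: "j \<in> J" "k \<in> Sr j" and r: "r \<in> {..<Q j} - {msg j w k}" and ag: "agree h j k w e r"
    by blast
  have fin: "finite ({..<Q j} - {msg j w k})" by simp
  have "1 \<le> (\<Sum>r\<in>{..<Q j} - {msg j w k}. if agree h j k w e r then 1 else (0::real))"
    using member_le_sum[OF r, of "\<lambda>r. if agree h j k w e r then 1 else (0::real)"] ag fin by auto
  then have "1 \<le> min 1 (\<Sum>r\<in>{..<Q j} - {msg j w k}. if agree h j k w e r then 1 else (0::real))" by simp
  also have "\<dots> \<le> (\<Sum>j\<in>{j\<in>J. k \<in> Sr j}. min 1 (\<Sum>r\<in>{..<Q j} - {msg j w k}. if agree h j k w e r then 1 else (0::real)))"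
    using j finJ by (intro member_le_sum) (auto intro!: sum_nonneg split: if_splits)
  also have "\<dots> \<le> ?R"
    using k finJ by (intro member_le_sum) (auto intro!: sum_nonneg split: if_splits)
  finally show ?thesis by simp
qed

end

lemma card_agree:
  assumes fU: "finite U" and fV: "finite V" and a: "a \<in> U" and b: "b \<in> U" and ab: "a \<noteq> b"
  shows "card {\<phi>\<in>PiE U (\<lambda>_. V). \<phi> a = \<phi> b} * card V = card (PiE U (\<lambda>_. V))"
proof -
  have bij: "bij_betw (\<lambda>\<phi>. restrict \<phi> (U - {a})) {\<phi>\<in>PiE U (\<lambda>_. V). \<phi> a = \<phi> b} (PiE (U - {a}) (\<lambda>_. V))"
  proof (rule bij_betwI[where g = "\<lambda>\<psi>. \<psi>(a := \<psi> b)"])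
    show "(\<lambda>\<phi>. restrict \<phi> (U - {a})) \<in> {\<phi>\<in>PiE U (\<lambda>_. V). \<phi> a = \<phi> b} \<rightarrow> PiE (U - {a}) (\<lambda>_. V)"
      by (auto simp: PiE_iff)
    show "(\<lambda>\<psi>. \<psi>(a := \<psi> b)) \<in> PiE (U - {a}) (\<lambda>_. V) \<rightarrow> {\<phi>\<in>PiE U (\<lambda>_. V). \<phi> a = \<phi> b}"
      using a b ab by (auto simp: PiE_iff extensional_def)
    show "\<And>x. x \<in> {\<phi>\<in>PiE U (\<lambda>_. V). \<phi> a = \<phi> b} \<Longrightarrow> (restrict x (U - {a}))(a := restrict x (U - {a}) b) = x"
      using a b ab by (auto simp: PiE_iff extensional_def fun_eq_iff)
    show "\<And>y. y \<in> PiE (U - {a}) (\<lambda>_. V) \<Longrightarrow> restrict (y(a := y b)) (U - {a}) = y"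
      using a b ab by (auto simp: PiE_iff extensional_def fun_eq_iff)
  qed
  have "card {\<phi>\<in>PiE U (\<lambda>_. V). \<phi> a = \<phi> b} = card V ^ card (U - {a})"
    using bij_betw_same_card[OF bij] fU by (simp add: card_PiE)
  moreover have cu: "card U = Suc (card (U - {a}))" using card_Suc_Diff1[OF fU a] by simp
  ultimately show ?thesis using fU by (simp add: card_PiE cu mult.commute)
qed

lemma min_le_powr:
  fixes x s :: real
  assumes "0 \<le> x" "0 < s" "s \<le> 1"
  shows "min 1 x \<le> x powr s"
proof (cases "x \<le> 1")
  case True
  show ?thesis
  proof (cases "x = 0")
    case False
    then have "x powr 1 \<le> x powr s" using True assms by (intro powr_mono') auto
    then show ?thesis using False assms by simp
  qed simp
next
  case False
  then have "1 \<le> x powr s" using assms by (simp add: ge_one_powr_ge_zero)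
  then show ?thesis by simp
qed

context sess begin

lemma finite_CB: "finite CB"
  unfolding CB_def using finite_U finite_Bits by (auto intro!: finite_PiE)

lemma CB_ne: "CB \<noteq> {}"
proof -
  have "Bits \<noteq> {}" unfolding Bits_def by (auto intro: exI[of _ "replicate F False"])
  then show ?thesis unfolding CB_def by (simp add: PiE_eq_empty_iff)
qed

lemma card_agree_set:
  assumes j: "j \<in> J" and k: "k \<in> Sr j" and w: "w \<in> W" and r: "r \<in> {..<Q j} - {msg j w k}"
  shows "real (card {h\<in>CB. agree h j k w e r}) = real (card CB) * (1 / 2 ^ F) ^ card {t\<in>I j. k \<notin> e t}"
proof -
  let ?P = "{t\<in>I j. k \<notin> e t}"
  let ?a = "(msg j w)(k := r)" and ?b = "msg j w"
  define c where "c t = (if t \<in> ?P then {\<phi>\<in>PiE (U t) (\<lambda>_. Bits). \<phi> ?a = \<phi> ?b} else PiE (U t) (\<lambda>_. Bits))" for t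
  have PI: "?P \<subseteq> {0..<n}" using Isub[OF j] by auto
  have cmem: "h t \<in> c t \<longleftrightarrow> h t \<in> PiE (U t) (\<lambda>_. Bits) \<and> (t \<in> ?P \<longrightarrow> h t ?a = h t ?b)" for h t
    by (auto simp: c_def)
  have eq: "{h\<in>CB. agree h j k w e r} = PiE {0..<n} c"
  proof (rule set_eqI)
    fix h
    have "h \<in> PiE {0..<n} c \<longleftrightarrow> (\<forall>t\<in>{0..<n}. h t \<in> c t) \<and> h \<in> extensional {0..<n}"
      by (simp only: PiE_iff)
    also have "\<dots> \<longleftrightarrow> ((\<forall>t\<in>{0..<n}. h t \<in> PiE (U t) (\<lambda>_. Bits)) \<and> h \<in> extensional {0..<n}) \<and> (\<forall>t\<in>{0..<n}. t \<in> ?P \<longrightarrow> h t ?a = h t ?b)"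
      unfolding cmem by blast
    also have "\<dots> \<longleftrightarrow> h \<in> CB \<and> agree h j k w e r"
      unfolding CB_def agree_def PiE_iff[of h] using PI by auto
    finally show "h \<in> {h\<in>CB. agree h j k w e r} \<longleftrightarrow> h \<in> PiE {0..<n} c" by simp
  qed
  have inU: "t \<in> ?P \<Longrightarrow> ?a \<in> U t \<and> ?b \<in> U t" for t
    using U_eq[OF j] msgP[OF j w] r k by (auto simp: PiE_iff extensional_def)
  have ab: "?a \<noteq> ?b" using r by (auto simp: fun_eq_iff)
  have cc: "real (card (c t)) = (if t \<in> ?P then real (card (PiE (U t) (\<lambda>_. Bits))) * (1 / 2 ^ F) else real (card (PiE (U t) (\<lambda>_. Bits))))" for t
  proof (cases "t \<in> ?P")
    case True
    have "card (c t) * card Bits = card (PiE (U t) (\<lambda>_. Bits))"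
      unfolding c_def using True card_agree[OF finite_U finite_Bits _ _ ab] inU[OF True] by simp
    then have "real (card (c t)) * 2 ^ F = real (card (PiE (U t) (\<lambda>_. Bits)))"
      unfolding card_Bits by (metis of_nat_mult of_nat_numeral of_nat_power)
    then show ?thesis using True by (simp add: field_simps)
  next
    case False
    then have "c t = PiE (U t) (\<lambda>_. Bits)" unfolding c_def by meson
    then show ?thesis using False by auto
  qed
  have "real (card {h\<in>CB. agree h j k w e r}) = (\<Prod>t\<in>{0..<n}. real (card (c t)))"
    unfolding eq by (simp add: card_PiE)
  also have "\<dots> = (\<Prod>t\<in>{0..<n}. real (card (PiE (U t) (\<lambda>_. Bits))) * (if t \<in> ?P then 1 / 2 ^ F else 1))"
    by (intro prod.cong) (auto simp: cc)
  also have "\<dots> = real (card CB) * (\<Prod>t\<in>{0..<n}. if t \<in> ?P then 1 / 2 ^ F else 1)"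
    unfolding CB_def by (simp add: prod.distrib card_PiE)
  also have "(\<Prod>t\<in>{0..<n}. if t \<in> ?P then (1::real) / 2 ^ F else 1) = (1 / 2 ^ F) ^ card ?P"
    using prod.inter_restrict[where A="{0..<n}" and g="\<lambda>t. (1::real) / 2 ^ F" and B="?P", symmetric] PI
    by (simp add: Int_absorb1)
  finally show ?thesis .
qed

lemma avg_min:
  assumes j: "j \<in> J" and k: "k \<in> Sr j" and w: "w \<in> W" and s: "0 < s" "s \<le> 1"
  shows "(\<Sum>h\<in>CB. min 1 (\<Sum>r\<in>{..<Q j} - {msg j w k}. if agree h j k w e r then 1 else (0::real)))
     \<le> real (card CB) * ((real (Q j) - 1) powr s * (\<Prod>t\<in>I j. if k \<in> e t then 1 else 2 powr (- real F * s)))"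
proof -
  let ?X = "\<lambda>h. \<Sum>r\<in>{..<Q j} - {msg j w k}. if agree h j k w e r then 1 else (0::real)"
  let ?c = "card {t\<in>I j. k \<notin> e t}"
  have m: "msg j w k < Q j" using msgP[OF j w] k by auto
  have cardr: "card ({..<Q j} - {msg j w k}) = Q j - 1" using m by simp
  have "(\<Sum>h\<in>CB. ?X h) = (\<Sum>r\<in>{..<Q j} - {msg j w k}. \<Sum>h\<in>CB. if agree h j k w e r then 1 else (0::real))"
    by (rule sum.swap)
  also have "\<dots> = (\<Sum>r\<in>{..<Q j} - {msg j w k}. real (card CB) * (1 / 2 ^ F) ^ ?c)"
  proof (rule sum.cong)
    fix r assume r: "r \<in> {..<Q j} - {msg j w k}"
    have "(\<Sum>h\<in>CB. if agree h j k w e r then 1 else (0::real)) = real (card {h\<in>CB. agree h j k w e r})"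
      using finite_CB by (simp add: sum.If_cases Int_def)
    then show "(\<Sum>h\<in>CB. if agree h j k w e r then 1 else (0::real)) = real (card CB) * (1 / 2 ^ F) ^ ?c"
      using card_agree_set[OF j k w r] by simp
  qed simp
  also have "\<dots> = real (card CB) * ((real (Q j) - 1) * (1 / 2 ^ F) ^ ?c)"
    using cardr m by (simp add: of_nat_diff)
  finally have sX: "(\<Sum>h\<in>CB. ?X h) = real (card CB) * ((real (Q j) - 1) * (1 / 2 ^ F) ^ ?c)" .
  have "(\<Sum>h\<in>CB. min 1 (?X h)) \<le> min (\<Sum>h\<in>CB. 1) (\<Sum>h\<in>CB. ?X h)"
    by (intro min.boundedI sum_mono) auto
  also have "\<dots> = real (card CB) * min 1 ((real (Q j) - 1) * (1 / 2 ^ F) ^ ?c)"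
    unfolding sX by (simp add: min_mult_distrib_left)
  also have "min 1 ((real (Q j) - 1) * (1 / 2 ^ F) ^ ?c) \<le> ((real (Q j) - 1) * (1 / 2 ^ F) ^ ?c) powr s"
    using m s by (intro min_le_powr) auto
  also have "((real (Q j) - 1) * (1 / 2 ^ F) ^ ?c) powr s = (real (Q j) - 1) powr s * (2 powr (- real F * s)) ^ ?c"
  proof -
    have e1: "((1::real) / 2 ^ F) ^ ?c = 1 / 2 ^ (F * ?c)" by (simp add: power_mult power_one_over)
    have e2: "(2::real) powr (real F * real ?c) = 2 ^ (F * ?c)"
      using powr_realpow[of 2 "F * ?c"] by simp
    have "((1::real) / 2 ^ F) ^ ?c = 2 powr (- real F * real ?c)"
      unfolding e1 using e2 by (simp add: powr_minus divide_inverse)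
    then have "(((1::real) / 2 ^ F) ^ ?c) powr s = 2 powr (- real F * real ?c * s)" by (simp add: powr_powr)
    also have "\<dots> = (2 powr (- real F * s)) ^ ?c" by (simp add: powr_realpow[symmetric] powr_powr mult_ac flip: powr_realpow)
    finally show ?thesis using m by (simp add: powr_mult)
  qed
  also have "(2 powr (- real F * s)) ^ ?c = (\<Prod>t\<in>I j. if k \<in> e t then 1 else 2 powr (- real F * s))"
  proof -
    have fI: "finite (I j)" using Isub[OF j] finite_subset by auto
    have "(\<Prod>t\<in>I j. if k \<in> e t then 1 else 2 powr (- real F * s)) = (\<Prod>t\<in>I j. if t \<in> {t. k \<notin> e t} then 2 powr (- real F * s) else 1)"
      by (intro prod.cong) auto
    also have "\<dots> = (\<Prod>t\<in>I j \<inter> {t. k \<notin> e t}. 2 powr (- real F * s))"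
      using prod.inter_restrict[OF fI, of "\<lambda>_. 2 powr (- real F * s)" "{t. k \<notin> e t}"] by simp
    also have "I j \<inter> {t. k \<notin> e t} = {t\<in>I j. k \<notin> e t}" by auto
    finally show ?thesis by simp
  qed
  finally show ?thesis by (simp add: mult_left_mono)
qed

end

context sess begin

definition "Bnd s = (\<Sum>k\<in>{1..K}. \<Sum>j\<in>{j\<in>J. k \<in> Sr j}. (real (Q j) - 1) powr s k *
   (erasure_prob Kw dw ds k + (1 - erasure_prob Kw dw ds k) * 2 powr (- real F * s k)) ^ card (I j))"

lemma exists_code:
  assumes s: "\<And>k. k \<in> {1..K} \<Longrightarrow> 0 < s k \<and> s k \<le> 1"
  shows "\<exists>fd phid. (\<forall>w\<in>W. \<forall>t<n. length (fd w t) = F) \<and>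
     error_prob Kw Ks D E n R g (\<lambda>_. fd) (\<lambda>_. phid) dd \<le> Bnd s"
proof -
  define Es where "Es = PiE {0..<n} (\<lambda>_. Pow {1..K})"
  define P where "P e = (\<Prod>t<n. pmf E (e t))" for e :: "nat \<Rightarrow> nat set"
  define ind where "ind h w e = (if \<exists>k\<in>{1..K}. ph h k (channel_out n e (fh h w) k) (if k \<le> Kw then g k w else 0) \<noteq> w (dd k) then 1 else (0::real))" for h w e
  define B where "B e = (\<Sum>k\<in>{1..K}. \<Sum>j\<in>{j\<in>J. k \<in> Sr j}. (real (Q j) - 1) powr s k *
       (\<Prod>t\<in>I j. if k \<in> e t then 1 else 2 powr (- real F * s k)))" for e :: "nat \<Rightarrow> nat set"
  define errp where "errp h = error_prob Kw Ks D E n R g (\<lambda>_. fh h) (\<lambda>_. ph h) dd" for h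
  have errp_eq: "errp h = (\<Sum>w\<in>W. \<Sum>e\<in>Es. P e * ind h w e) / real (card W)" for h
    unfolding errp_def error_prob_def Es_def P_def ind_def by simp
  have finW: "finite W" unfolding msg_set_def by (auto intro!: finite_PiE)
  have finEs: "finite Es" unfolding Es_def by (auto intro!: finite_PiE)
  have Pnn: "0 \<le> P e" for e unfolding P_def by (auto intro!: prod_nonneg)
  have Bnn: "0 \<le> B e" for e unfolding B_def by (auto intro!: sum_nonneg mult_nonneg_nonneg prod_nonneg)
  have step1: "(\<Sum>h\<in>CB. ind h w e) \<le> real (card CB) * B e" if w: "w \<in> W" for w e
  proof -
    have "(\<Sum>h\<in>CB. ind h w e) \<le> (\<Sum>h\<in>CB. \<Sum>k\<in>{1..K}. \<Sum>j\<in>{j\<in>J. k \<in> Sr j}.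
         min 1 (\<Sum>r\<in>{..<Q j} - {msg j w k}. if agree h j k w e r then 1 else (0::real)))"
      unfolding ind_def by (intro sum_mono err_le[OF w])
    also have "\<dots> = (\<Sum>k\<in>{1..K}. \<Sum>j\<in>{j\<in>J. k \<in> Sr j}. \<Sum>h\<in>CB.
         min 1 (\<Sum>r\<in>{..<Q j} - {msg j w k}. if agree h j k w e r then 1 else (0::real)))"
      by (simp add: sum.swap[of _ CB])
    also have "\<dots> \<le> (\<Sum>k\<in>{1..K}. \<Sum>j\<in>{j\<in>J. k \<in> Sr j}. real (card CB) * ((real (Q j) - 1) powr s k *
       (\<Prod>t\<in>I j. if k \<in> e t then 1 else 2 powr (- real F * s k))))"
      using s by (intro sum_mono avg_min[OF _ _ w]) auto
    also have "\<dots> = real (card CB) * B e" unfolding B_def by (simp add: sum_distrib_left)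
    finally show ?thesis .
  qed
  have step2: "(\<Sum>e\<in>Es. P e * B e) = Bnd s"
  proof -
    have "(\<Sum>e\<in>Es. P e * B e) = (\<Sum>k\<in>{1..K}. \<Sum>j\<in>{j\<in>J. k \<in> Sr j}. (real (Q j) - 1) powr s k *
       (\<Sum>e\<in>Es. P e * (\<Prod>t\<in>I j. if k \<in> e t then 1 else 2 powr (- real F * s k))))"
      unfolding B_def by (simp add: sum_distrib_left sum_distrib_right sum.swap[of _ Es] mult_ac)
    also have "\<dots> = Bnd s"
      unfolding Bnd_def Es_def P_def
      by (intro sum.cong refl arg_cong2[where f="(*)"] erasure_prod[OF law]) (auto dest: Isub)
    finally show ?thesis .
  qed
  have "(\<Sum>h\<in>CB. errp h) = (\<Sum>w\<in>W. \<Sum>e\<in>Es. P e * (\<Sum>h\<in>CB. ind h w e)) / real (card W)"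
    unfolding errp_eq by (simp add: sum_divide_distrib[symmetric] sum_distrib_left sum.swap[of _ CB])
  also have "\<dots> \<le> (\<Sum>w\<in>W. \<Sum>e\<in>Es. P e * (real (card CB) * B e)) / real (card W)"
    using step1 Pnn by (intro divide_right_mono sum_mono mult_left_mono) auto
  also have "\<dots> = real (card CB) * (real (card W) * Bnd s) / real (card W)"
  proof -
    have st3: "(\<Sum>e\<in>Es. P e * (real (card CB) * B e)) = real (card CB) * Bnd s"
      unfolding step2[symmetric] sum_distrib_left by (simp add: mult.left_commute)
    show ?thesis unfolding st3 by simp
  qed
  also have "\<dots> \<le> real (card CB) * Bnd s"
  proof -
    have "0 \<le> Bnd s" unfolding step2[symmetric] using Pnn Bnn by (auto intro: sum_nonneg)
    then show ?thesis by (cases "card W = 0") (auto simp: mult_ac)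
  qed
  finally have avg: "(\<Sum>h\<in>CB. errp h) \<le> real (card CB) * Bnd s" .
  have "\<exists>h\<in>CB. errp h \<le> Bnd s"
  proof (rule ccontr)
    assume "\<not> ?thesis"
    then have "\<forall>h\<in>CB. Bnd s < errp h" by auto
    then have "(\<Sum>h\<in>CB. Bnd s) < (\<Sum>h\<in>CB. errp h)"
      using finite_CB CB_ne by (intro sum_strict_mono) auto
    then show False using avg by simp
  qed
  then obtain h where h: "h \<in> CB" "errp h \<le> Bnd s" by blast
  show ?thesis
    using h fh_len unfolding errp_def by blast
qed

end

lemma sum_pow_card:
  assumes "finite A"
  shows "(\<Sum>T\<in>Pow A. f (card T)) = (\<Sum>t=0..card A. of_nat (card A choose t) * (f t :: real))"
proof -
  have "(\<Sum>T\<in>Pow A. f (card T)) = (\<Sum>t\<in>{0..card A}. \<Sum>T\<in>{T\<in>Pow A. card T = t}. f (card T))"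
    using assms by (intro sum.group[symmetric]) (auto intro: card_mono)
  also have "\<dots> = (\<Sum>t\<in>{0..card A}. of_nat (card A choose t) * f t)"
  proof (rule sum.cong)
    fix t
    have "{T\<in>Pow A. card T = t} = {B. B \<subseteq> A \<and> card B = t}" by auto
    then have "card {T\<in>Pow A. card T = t} = card A choose t" using n_subsets[OF assms] by simp
    then show "(\<Sum>T\<in>{T\<in>Pow A. card T = t}. f (card T)) = of_nat (card A choose t) * f t"
      by simp
  qed simp
  finally show ?thesis .
qed

lemma sum_pow_card_mem:
  assumes "finite A" "i \<in> A"
  shows "(\<Sum>T\<in>{T\<in>Pow A. i \<in> T}. f (card T)) = (\<Sum>t=0..card A - 1. of_nat ((card A - 1) choose t) * (f (Suc t) :: real))"
proof -
  have fA: "finite (A - {i})" using assms by simp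
  have "(\<Sum>T\<in>{T\<in>Pow A. i \<in> T}. f (card T)) = (\<Sum>T\<in>Pow (A - {i}). f (card (insert i T)))"
    by (rule sum.reindex_bij_witness[where i="insert i" and j="\<lambda>T. T - {i}"]) (use assms in \<open>auto simp: insert_absorb\<close>)
  also have "\<dots> = (\<Sum>T\<in>Pow (A - {i}). f (Suc (card T)))"
  proof (intro sum.cong refl)
    fix T assume "T \<in> Pow (A - {i})"
    then have "finite T" "i \<notin> T" using fA finite_subset by auto
    then show "f (card (insert i T)) = f (Suc (card T))" by simp
  qed
  also have "\<dots> = (\<Sum>t=0..card (A - {i}). of_nat (card (A - {i}) choose t) * f (Suc t))"
    by (rule sum_pow_card[OF fA, of "\<lambda>t. f (Suc t)"])
  finally show ?thesis using assms by simp
qed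

lemma slots:
  assumes "finite J"
  shows "\<exists>I. (\<forall>j\<in>J. I j \<subseteq> {0..<(\<Sum>j\<in>J. l j)} \<and> card (I j) = l j) \<and>
             (\<forall>j1\<in>J. \<forall>j2\<in>J. j1 \<noteq> j2 \<longrightarrow> I j1 \<inter> I j2 = {})"
  using assms
proof (induction J rule: finite_induct)
  case empty
  show ?case by simp
next
  case (insert x F)
  then obtain I where I1: "\<And>j. j\<in>F \<Longrightarrow> I j \<subseteq> {0..<(\<Sum>j\<in>F. l j)}"
    and I2: "\<And>j. j\<in>F \<Longrightarrow> card (I j) = l j"
    and dis: "\<And>j1 j2. j1\<in>F \<Longrightarrow> j2\<in>F \<Longrightarrow> j1 \<noteq> j2 \<Longrightarrow> I j1 \<inter> I j2 = {}" by metis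
  define s where "s = (\<Sum>j\<in>F. l j)"
  define I' where "I' = I(x := {s..<s + l x})"
  have tot: "(\<Sum>j\<in>insert x F. l j) = s + l x" using insert unfolding s_def by simp
  have ix: "I' x = {s..<s + l x}" unfolding I'_def by simp
  have iF: "j \<in> F \<Longrightarrow> I' j = I j" for j using insert(2) unfolding I'_def by auto
  have sub: "j \<in> F \<Longrightarrow> I' j \<subseteq> {0..<s}" for j using iF I1 unfolding s_def by simp
  have dj: "j \<in> F \<Longrightarrow> I' j \<inter> I' x = {}" for j
  proof -
    assume "j \<in> F"
    then have "I' j \<subseteq> {0..<s}" by (rule sub)
    then show "I' j \<inter> I' x = {}" unfolding ix by auto
  qed
  have a: "I' j \<subseteq> {0..<(\<Sum>j\<in>insert x F. l j)} \<and> card (I' j) = l j" if "j \<in> insert x F" for j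
  proof (cases "j = x")
    case True then show ?thesis unfolding tot using ix by simp
  next
    case False
    then have jF: "j \<in> F" using that by simp
    have "I' j \<subseteq> {0..<s + l x}" using sub[OF jF] by auto
    then show ?thesis unfolding tot using iF[OF jF] I2[OF jF] by simp
  qed
  have b: "I' j1 \<inter> I' j2 = {}" if j: "j1 \<in> insert x F" "j2 \<in> insert x F" "j1 \<noteq> j2" for j1 j2
  proof (cases "j1 = x")
    case True
    then have "j2 \<in> F" using j by auto
    then show ?thesis using dj True by blast
  next
    case False
    note f = this
    show ?thesis
    proof (cases "j2 = x")
      case True
      then have "j1 \<in> F" using j f by auto
      then show ?thesis using dj True by blast
    next
      case False
      then show ?thesis using j f dis iF by auto
    qed
  qed
  show ?case using a b by blast
qed

lemma binom_ratio:
  assumes "u < n"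
  shows "real (n choose Suc u) * real (Suc u) = real (n choose u) * (real n - real u)"
proof -
  have "Suc u * (n choose Suc u) = n * ((n - 1) choose u)"
    using times_binomial_minus1_eq[of "Suc u" n] by simp
  moreover have "(n - u) * (n choose u) = n * ((n - 1) choose u)" by (rule binomial_absorb_comp)
  ultimately have "Suc u * (n choose Suc u) = (n - u) * (n choose u)" by simp
  then have "real (Suc u * (n choose Suc u)) = real ((n - u) * (n choose u))" by simp
  then show ?thesis using assms by (simp add: of_nat_diff algebra_simps)
qed


lemma exists_s:
  fixes \<delta> c F :: real
  assumes "0 \<le> \<delta>" "\<delta> < 1" "0 < c" "c < 1 - \<delta>" "0 < F"
  shows "\<exists>d>0. \<forall>s. 0 < s \<and> s < d \<longrightarrow> \<delta> + (1 - \<delta>) * 2 powr (- F * s) < 2 powr (- F * s * c)"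
proof -
  define \<phi> where "\<phi> s = exp (- F * s * c * ln 2) - \<delta> - (1 - \<delta>) * exp (- F * s * ln 2)" for s :: real
  have der: "DERIV \<phi> 0 :> F * ln 2 * (1 - \<delta> - c)"
    unfolding \<phi>_def by (auto intro!: derivative_eq_intros simp: algebra_simps)
  have pos: "0 < F * ln 2 * (1 - \<delta> - c)" using assms by simp
  obtain d where d: "d > 0" "\<And>h. h > 0 \<Longrightarrow> h < d \<Longrightarrow> \<phi> 0 < \<phi> (0 + h)"
    using DERIV_pos_inc_right[OF der pos] by blast
  have p: "2 powr y = exp (y * ln 2)" for y :: real by (simp add: powr_def)
  show ?thesis
  proof (intro exI[of _ d] conjI allI impI)
    fix s assume s: "0 < s \<and> s < d"
    have "\<phi> 0 < \<phi> s" using d(2)[of s] s by simp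
    moreover have "\<phi> 0 = 0" unfolding \<phi>_def by simp
    ultimately show "\<delta> + (1 - \<delta>) * 2 powr (- F * s) < 2 powr (- F * s * c)"
      unfolding \<phi>_def p by (simp add: mult_ac)
  qed (use d in auto)
qed

lemma term_bound:
  fixes \<delta> s F \<eta> X B a :: real and l :: nat
  assumes d: "0 \<le> \<delta>" "\<delta> < 1" and s: "0 < s" "s \<le> 1" and F: "0 < F" and eta: "0 < \<eta>"
    and a: "a = \<delta> + (1 - \<delta>) * 2 powr (- F * s)"
    and ab: "a \<le> 2 powr (- F * s * ((1 - \<delta>) / (1 + \<eta>/2)))"
    and X: "0 \<le> X" "X \<le> 2 powr B" and B: "0 \<le> B"
    and l: "B * (1 + \<eta>) / (F * (1 - \<delta>)) \<le> real l"
  shows "X powr s * a ^ l \<le> 2 powr (- s * B * (\<eta> / (2 + \<eta>)))"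
proof -
  define r where "r = B * (1 + \<eta>) / (F * (1 - \<delta>))"
  have r0: "0 \<le> r" unfolding r_def using B F d eta by auto
  have t1: "X powr s \<le> 2 powr (B * s)"
  proof -
    have "X powr s \<le> (2 powr B) powr s" using X s by (intro powr_mono2) auto
    then show ?thesis by (simp add: powr_powr)
  qed
  have e0: "0 < 2 powr (- F * s)" by simp
  have e1: "2 powr (- F * s) \<le> 1"
  proof -
    have "2 powr (- F * s) \<le> 2 powr 0" using F s by (intro powr_mono) auto
    then show ?thesis by simp
  qed
  have apos: "0 < a"
  proof (cases "\<delta> = 0")
    case True then show ?thesis using a by simp
  next
    case False then have "0 < \<delta>" using d by simp
    then show ?thesis using a d e0 by (simp add: add_pos_nonneg)
  qed
  have a1: "a \<le> 1"
  proof -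
    have "(1 - \<delta>) * 2 powr (- F * s) \<le> (1 - \<delta>) * 1" using d e1 by (intro mult_left_mono) auto
    then show ?thesis using a by simp
  qed
  have "a ^ l = a powr real l" using apos by (simp add: powr_realpow)
  also have "\<dots> \<le> a powr r" using apos a1 l unfolding r_def by (intro powr_mono') auto
  also have "\<dots> \<le> (2 powr (- F * s * ((1 - \<delta>) / (1 + \<eta>/2)))) powr r"
    using apos ab r0 by (intro powr_mono2) auto
  also have "\<dots> = 2 powr (- F * s * ((1 - \<delta>) / (1 + \<eta>/2)) * r)" by (simp add: powr_powr)
  also have "- F * s * ((1 - \<delta>) / (1 + \<eta>/2)) * r = - s * B * (1 + \<eta>) / (1 + \<eta>/2)"
    unfolding r_def using F d eta by simp
  finally have t2: "a ^ l \<le> 2 powr (- s * B * (1 + \<eta>) / (1 + \<eta>/2))" .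
  have "X powr s * a ^ l \<le> 2 powr (B * s) * 2 powr (- s * B * (1 + \<eta>) / (1 + \<eta>/2))"
    using t1 t2 apos by (intro mult_mono) auto
  also have "\<dots> = 2 powr (B * s - s * B * (1 + \<eta>) / (1 + \<eta>/2))" by (simp add: powr_add[symmetric])
  also have "B * s - s * B * (1 + \<eta>) / (1 + \<eta>/2) = - s * B * (\<eta> / (2 + \<eta>))"
    using eta by (simp add: field_simps)
  finally show ?thesis .
qed


locale man =
  fixes Kw Ks D :: nat and dw ds R M :: real and E :: "nat set pmf" and n F :: nat
    and b :: "nat \<Rightarrow> nat" and lw :: "nat \<Rightarrow> nat" and ls :: nat
    and enc :: "nat \<Rightarrow> nat set \<Rightarrow> nat" and cenc :: "nat \<Rightarrow> (nat \<times> nat set \<Rightarrow> nat) \<Rightarrow> nat"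
  assumes law: "valid_erasure_law Kw Ks dw ds E"
    and encP: "\<And>x. x \<in> {1..num_msgs n R} \<Longrightarrow> enc x \<in> PiE (Pow {1..Kw}) (\<lambda>T. {..<2 ^ b (card T)})"
    and enc_inj: "inj_on enc {1..num_msgs n R}"
    and cencP: "\<And>i. i \<in> {1..Kw} \<Longrightarrow> cenc i ` PiE ({1..D} \<times> {T\<in>Pow {1..Kw}. i \<in> T}) (\<lambda>(d', T). {..<2 ^ b (card T)}) \<subseteq> {1..num_msgs n M}"
    and cenc_inj: "\<And>i. i \<in> {1..Kw} \<Longrightarrow> inj_on (cenc i) (PiE ({1..D} \<times> {T\<in>Pow {1..Kw}. i \<in> T}) (\<lambda>(d', T). {..<2 ^ b (card T)}))"
    and timeOK: "(\<Sum>S\<in>{S\<in>Pow {1..Kw}. S \<noteq> {}}. lw (card S - 1)) + Ks * ls \<le> n"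
begin

abbreviation "N \<equiv> num_msgs n R"
abbreviation "W \<equiv> msg_set D n R"
definition "CV i = PiE ({1..D} \<times> {T\<in>Pow {1..Kw}. i \<in> T}) (\<lambda>(d', T). {..<2 ^ b (card T)})"
definition "cachec i (w::nat\<Rightarrow>nat) = restrict (\<lambda>(d'::nat, T::nat set). enc (w d') T) ({1..D} \<times> {T\<in>Pow {1..Kw}. i \<in> T})"
definition "g i w = cenc i (cachec i w)"
definition "cdec i v = inv_into (CV i) (cenc i) v"
definition "Js = {S\<in>Pow {1..Kw}. S \<noteq> {}} <+> {Kw+1..Kw+Ks}"
definition "Sr (j :: nat set + nat) = (case j of Inl S \<Rightarrow> S | Inr j' \<Rightarrow> {j'})"
definition "Q (j :: nat set + nat) = (case j of Inl S \<Rightarrow> 2 ^ b (card S - 1) | Inr j' \<Rightarrow> N + 1)"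
definition "lsl (j :: nat set + nat) = (case j of Inl S \<Rightarrow> lw (card S - 1) | Inr j' \<Rightarrow> ls)"
definition "msg d j w = (case j of Inl S \<Rightarrow> restrict (\<lambda>k'. enc (w (d k')) (S - {k'})) S
                                  | Inr j' \<Rightarrow> restrict (\<lambda>_. w (d j')) {j'})"
definition "side d j k v = (case j of Inl S \<Rightarrow> restrict (\<lambda>k'. cdec k v (d k', S - {k'})) S
                                    | Inr j' \<Rightarrow> (\<lambda>_. undefined))"
definition "recon d k v dec = (if k \<le> Kw then
     inv_into {1..N} enc (restrict (\<lambda>T. if k \<in> T then cdec k v (d k, T) else dec (Inl (insert k T))) (Pow {1..Kw}))
   else dec (Inr k))"

lemma W_mem: "w \<in> W \<Longrightarrow> d' \<in> {1..D} \<Longrightarrow> w d' \<in> {1..N}"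
  unfolding msg_set_def by auto

lemma dem_mem: "d \<in> demand_set (Kw+Ks) D \<Longrightarrow> k \<in> {1..Kw+Ks} \<Longrightarrow> d k \<in> {1..D}"
  unfolding demand_set_def by auto

lemma cachec_CV: "w \<in> W \<Longrightarrow> cachec i w \<in> CV i"
  unfolding cachec_def CV_def using encP W_mem by (auto simp: PiE_iff)

lemma cdec_g:
  assumes i: "i \<in> {1..Kw}" and w: "w \<in> W"
  shows "cdec i (g i w) = cachec i w"
proof -
  have m: "cachec i w \<in> CV i" by (rule cachec_CV[OF w])
  have inj: "inj_on (cenc i) (CV i)" unfolding CV_def by (rule cenc_inj[OF i])
  show ?thesis unfolding cdec_def g_def by (rule inv_into_f_f[OF inj m])
qed

lemma g_range:
  assumes i: "i \<in> {1..Kw}" and w: "w \<in> W"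
  shows "g i w \<in> {1..num_msgs n M}"
proof -
  have m: "cachec i w \<in> CV i" by (rule cachec_CV[OF w])
  have "cenc i ` CV i \<subseteq> {1..num_msgs n M}" unfolding CV_def by (rule cencP[OF i])
  then show ?thesis unfolding g_def using m by blast
qed

lemma finJs: "finite Js" unfolding Js_def by auto

lemma sum_lsl: "(\<Sum>j\<in>Js. lsl j) \<le> n"
proof -
  have f1: "finite {S\<in>Pow {1..Kw}. S \<noteq> {}}" by simp
  have "(\<Sum>j\<in>Js. lsl j) = (\<Sum>S\<in>{S\<in>Pow {1..Kw}. S \<noteq> {}}. lsl (Inl S)) + (\<Sum>j\<in>{Kw+1..Kw+Ks}. lsl (Inr j))"
    unfolding Js_def using sum.Plus[OF f1 finite_atLeastAtMost, of lsl "Kw+1" "Kw+Ks"] by (simp add: comp_def)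
  also have "\<dots> = (\<Sum>S\<in>{S\<in>Pow {1..Kw}. S \<noteq> {}}. lw (card S - 1)) + Ks * ls"
    by (simp add: lsl_def)
  finally show ?thesis using timeOK by linarith
qed

lemma msgP_ok:
  assumes d: "d \<in> demand_set (Kw+Ks) D"
  shows "\<And>j w. j \<in> Js \<Longrightarrow> w \<in> W \<Longrightarrow> msg d j w \<in> PiE (Sr j) (\<lambda>_. {..<Q j})"
proof -
  fix j w assume j: "j \<in> Js" and w: "w \<in> W"
  show "msg d j w \<in> PiE (Sr j) (\<lambda>_. {..<Q j})"
  proof (cases j)
    case (Inl S)
    have S: "S \<subseteq> {1..Kw}" using j Inl unfolding Js_def by auto
    have "enc (w (d k')) (S - {k'}) < 2 ^ b (card S - 1)" if k': "k' \<in> S" for k'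
    proof -
      have "d k' \<in> {1..D}" using dem_mem[OF d] S k' by auto
      then have "enc (w (d k')) \<in> PiE (Pow {1..Kw}) (\<lambda>T. {..<2 ^ b (card T)})" using encP W_mem[OF w] by auto
      moreover have "S - {k'} \<in> Pow {1..Kw}" using S by auto
      ultimately have "enc (w (d k')) (S - {k'}) \<in> {..<2 ^ b (card (S - {k'}))}" by (rule PiE_mem)
      moreover have "card (S - {k'}) = card S - 1" using k' S by (simp add: finite_subset)
      ultimately show ?thesis by simp
    qed
    then show ?thesis using Inl unfolding msg_def Sr_def Q_def by auto
  next
    case (Inr j')
    have "d j' \<in> {1..D}" using dem_mem[OF d] j Inr unfolding Js_def by auto
    then have "w (d j') \<in> {1..N}" by (rule W_mem[OF w])
    then have "w (d j') < N + 1" by simp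
    then show ?thesis using Inr unfolding msg_def Sr_def Q_def by auto
  qed
qed

lemma sideP_ok:
  assumes d: "d \<in> demand_set (Kw+Ks) D"
  shows "\<And>j k w. j \<in> Js \<Longrightarrow> k \<in> Sr j \<Longrightarrow> w \<in> W \<Longrightarrow> (side d j k (if k \<le> Kw then g k w else 0))(k := msg d j w k) = msg d j w"
proof -
  fix j k w assume j: "j \<in> Js" and k: "k \<in> Sr j" and w: "w \<in> W"
  show "(side d j k (if k \<le> Kw then g k w else 0))(k := msg d j w k) = msg d j w"
  proof (cases j)
    case (Inl S)
    have S: "S \<subseteq> {1..Kw}" using j Inl unfolding Js_def by auto
    have kS: "k \<in> S" using k Inl unfolding Sr_def by simp
    have kK: "k \<in> {1..Kw}" using kS S by auto
    have c: "cdec k (g k w) (d k', S - {k'}) = enc (w (d k')) (S - {k'})" if "k' \<in> S" "k' \<noteq> k" for k'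
    proof -
      have "d k' \<in> {1..D}" using dem_mem[OF d] S that by auto
      then have mem: "(d k', S - {k'}) \<in> {1..D} \<times> {T\<in>Pow {1..Kw}. k \<in> T}" using that kS S by auto
      show ?thesis unfolding cdec_g[OF kK w] cachec_def using mem by simp
    qed
    show ?thesis
    proof (rule ext)
      fix k'
      show "((side d j k (if k \<le> Kw then g k w else 0))(k := msg d j w k)) k' = msg d j w k'"
      proof (cases "k' = k")
        case True then show ?thesis by simp
      next
        case False
        have gk: "(if k \<le> Kw then g k w else 0) = g k w" using kK by simp
        show ?thesis
        proof (cases "k' \<in> S")
          case True
          then show ?thesis using False c[OF True False] unfolding gk Inl side_def msg_def by simp
        next
          case nS: False
          then show ?thesis using False unfolding gk Inl side_def msg_def by simp
        qed
      qed
    qed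
  next
    case (Inr j')
    then show ?thesis using k unfolding side_def msg_def Sr_def by (auto simp: fun_eq_iff)
  qed
qed

lemma recon_ok:
  assumes d: "d \<in> demand_set (Kw+Ks) D"
  shows "\<And>k w. k \<in> {1..Kw+Ks} \<Longrightarrow> w \<in> W \<Longrightarrow> recon d k (if k \<le> Kw then g k w else 0) (\<lambda>j. if j \<in> Js \<and> k \<in> Sr j then msg d j w k else 0) = w (d k)"
proof -
  fix k w assume k: "k \<in> {1..Kw+Ks}" and w: "w \<in> W"
  let ?dec = "\<lambda>j. if j \<in> Js \<and> k \<in> Sr j then msg d j w k else 0"
  have dk: "d k \<in> {1..D}" using dem_mem[OF d k] .
  show "recon d k (if k \<le> Kw then g k w else 0) ?dec = w (d k)"
  proof (cases "k \<le> Kw")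
    case True
    have kK: "k \<in> {1..Kw}" using k True by auto
    have "restrict (\<lambda>T. if k \<in> T then cdec k (g k w) (d k, T) else ?dec (Inl (insert k T))) (Pow {1..Kw})
        = enc (w (d k))"
    proof (rule ext)
      fix T
      show "restrict (\<lambda>T. if k \<in> T then cdec k (g k w) (d k, T) else ?dec (Inl (insert k T))) (Pow {1..Kw}) T = enc (w (d k)) T"
      proof (cases "T \<in> Pow {1..Kw}")
        case False
        have "enc (w (d k)) \<in> PiE (Pow {1..Kw}) (\<lambda>T. {..<2 ^ b (card T)})" using encP W_mem[OF w dk] by auto
        then show ?thesis using False by (auto simp: PiE_iff extensional_def)
      next
        case TT: True
        show ?thesis
        proof (cases "k \<in> T")
          case True
          then show ?thesis using TT dk unfolding cdec_g[OF kK w] cachec_def by auto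
        next
          case False
          have "Inl (insert k T) \<in> Js" using TT kK unfolding Js_def by auto
          moreover have "insert k T - {k} = T" using False by auto
          ultimately show ?thesis using TT False unfolding msg_def Sr_def by auto
        qed
      qed
    qed
    then show ?thesis using True W_mem[OF w dk] enc_inj unfolding recon_def by simp
  next
    case False
    have "Inr k \<in> Js" using k False unfolding Js_def by auto
    then show ?thesis using False unfolding recon_def msg_def Sr_def by simp
  qed
qed

lemma sess_ok:
  assumes d: "d \<in> demand_set (Kw+Ks) D"
    and I1: "\<And>j. j \<in> Js \<Longrightarrow> I j \<subseteq> {0..<n}"
    and I2: "\<And>j1 j2. j1 \<in> Js \<Longrightarrow> j2 \<in> Js \<Longrightarrow> j1 \<noteq> j2 \<Longrightarrow> I j1 \<inter> I j2 = {}"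
  shows "sess Kw Ks D dw ds R E n g d Js Sr Q I (msg d) (side d) (recon d)"
proof
  show "valid_erasure_law Kw Ks dw ds E" by (rule law)
  show "finite Js" by (rule finJs)
  show "finite (Sr j)" if "j \<in> Js" for j
  proof (cases j)
    case (Inl S)
    then have "S \<subseteq> {1..Kw}" using that unfolding Js_def by auto
    then show ?thesis using Inl unfolding Sr_def by (simp add: rev_finite_subset[of "{1..Kw}"])
  next
    case (Inr j')
    then show ?thesis unfolding Sr_def by simp
  qed
  show "Sr j \<subseteq> {1..Kw+Ks}" if "j \<in> Js" for j
    using that unfolding Js_def Sr_def by (cases j) auto
  show "\<And>j. j \<in> Js \<Longrightarrow> I j \<subseteq> {0..<n}" by (rule I1)
  show "\<And>j1 j2. j1 \<in> Js \<Longrightarrow> j2 \<in> Js \<Longrightarrow> j1 \<noteq> j2 \<Longrightarrow> I j1 \<inter> I j2 = {}" by (rule I2)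
  show "\<And>j w. j \<in> Js \<Longrightarrow> w \<in> W \<Longrightarrow> msg d j w \<in> PiE (Sr j) (\<lambda>_. {..<Q j})" by (rule msgP_ok[OF d])
  show "\<And>j k w. j \<in> Js \<Longrightarrow> k \<in> Sr j \<Longrightarrow> w \<in> W \<Longrightarrow> (side d j k (if k \<le> Kw then g k w else 0))(k := msg d j w k) = msg d j w"
    by (rule sideP_ok[OF d])
  show "\<And>k w. k \<in> {1..Kw+Ks} \<Longrightarrow> w \<in> W \<Longrightarrow> recon d k (if k \<le> Kw then g k w else 0) (\<lambda>j. if j \<in> Js \<and> k \<in> Sr j then msg d j w k else 0) = w (d k)"
    by (rule recon_ok[OF d])
qed

end

context man begin

definition "aj s (j :: nat set + nat) = (case j of Inl _ \<Rightarrow> dw + (1 - dw) * 2 powr (- real F * s) | Inr _ \<Rightarrow> ds + (1 - ds) * 2 powr (- real F * s))"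
definition "TJ s = (\<Sum>j\<in>Js. (real (Q j) - 1) powr s * aj s j ^ lsl j)"

lemma aj_nonneg: assumes "0 \<le> dw" "dw \<le> 1" "0 \<le> ds" "ds \<le> 1" shows "0 \<le> aj s j"
  using assms unfolding aj_def by (cases j) (auto intro!: add_nonneg_nonneg mult_nonneg_nonneg)

lemma man_result:
  assumes s: "0 < s" "s \<le> 1" and dd: "0 \<le> dw" "dw \<le> 1" "0 \<le> ds" "ds \<le> 1"
  shows "\<exists>f phi. (\<forall>d\<in>demand_set (Kw+Ks) D. \<forall>w\<in>W. \<forall>t<n. length (f d w t) = F) \<and>
      (\<forall>d\<in>demand_set (Kw+Ks) D. error_prob Kw Ks D E n R g f phi d \<le> real (Kw+Ks) * TJ s)"
proof -
  have one: "\<exists>fd phid. (\<forall>w\<in>W. \<forall>t<n. length (fd w t) = F) \<and>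
       error_prob Kw Ks D E n R g (\<lambda>_. fd) (\<lambda>_. phid) d \<le> real (Kw+Ks) * TJ s"
    if d: "d \<in> demand_set (Kw+Ks) D" for d
  proof -
    from slots[OF finJs, of lsl] obtain I where Iall: "(\<forall>j\<in>Js. I j \<subseteq> {0..<(\<Sum>j\<in>Js. lsl j)} \<and> card (I j) = lsl j) \<and>
      (\<forall>j1\<in>Js. \<forall>j2\<in>Js. j1 \<noteq> j2 \<longrightarrow> I j1 \<inter> I j2 = {})" ..
    have I: "\<forall>j\<in>Js. I j \<subseteq> {0..<(\<Sum>j\<in>Js. lsl j)} \<and> card (I j) = lsl j" using Iall by (rule conjunct1)
    have dis: "\<And>j1 j2. j1 \<in> Js \<Longrightarrow> j2 \<in> Js \<Longrightarrow> j1 \<noteq> j2 \<Longrightarrow> I j1 \<inter> I j2 = {}" using Iall by blast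
    have I1: "I j \<subseteq> {0..<n}" if j: "j \<in> Js" for j
    proof -
      have "I j \<subseteq> {0..<(\<Sum>j\<in>Js. lsl j)}" using bspec[OF I j] by (rule conjunct1)
      moreover have "{0..<(\<Sum>j\<in>Js. lsl j)} \<subseteq> {0..<n}" using sum_lsl by (simp add: subset_iff)
      ultimately show ?thesis by (rule order_trans)
    qed
    interpret S: sess Kw Ks D dw ds R E n F g d Js Sr Q I "msg d" "side d" "recon d"
      by (rule sess_ok[OF d I1 dis])
    obtain fd phid where fp: "\<forall>w\<in>W. \<forall>t<n. length (fd w t) = F"
      "error_prob Kw Ks D E n R g (\<lambda>_. fd) (\<lambda>_. phid) d \<le> S.Bnd (\<lambda>_. s)"
    proof -
      have "\<exists>fd phid. (\<forall>w\<in>W. \<forall>t<n. length (fd w t) = F) \<and>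
          error_prob Kw Ks D E n R g (\<lambda>_. fd) (\<lambda>_. phid) d \<le> S.Bnd (\<lambda>_. s)"
        by (rule S.exists_code) (use s in simp)
      then show ?thesis using that by blast
    qed
    have "S.Bnd (\<lambda>_. s) \<le> (\<Sum>k\<in>{1..Kw+Ks}. TJ s)"
      unfolding S.Bnd_def TJ_def
    proof (rule sum_mono)
      fix k assume k: "k \<in> {1..Kw+Ks}"
      have "(\<Sum>j\<in>{j\<in>Js. k \<in> Sr j}. (real (Q j) - 1) powr s *
          (erasure_prob Kw dw ds k + (1 - erasure_prob Kw dw ds k) * 2 powr (- real F * s)) ^ card (I j))
        = (\<Sum>j\<in>{j\<in>Js. k \<in> Sr j}. (real (Q j) - 1) powr s * aj s j ^ lsl j)"
      proof (rule sum.cong)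
        fix j assume j: "j \<in> {j\<in>Js. k \<in> Sr j}"
        have "erasure_prob Kw dw ds k + (1 - erasure_prob Kw dw ds k) * 2 powr (- real F * s) = aj s j"
        proof (cases j)
          case (Inl S)
          then have "k \<le> Kw" using j unfolding Js_def Sr_def by auto
          then show ?thesis using Inl unfolding aj_def erasure_prob_def by simp
        next
          case (Inr j')
          then have "\<not> k \<le> Kw" using j unfolding Js_def Sr_def by auto
          then show ?thesis using Inr unfolding aj_def erasure_prob_def by simp
        qed
        moreover have "card (I j) = lsl j" using I j by auto
        ultimately show "(real (Q j) - 1) powr s *
          (erasure_prob Kw dw ds k + (1 - erasure_prob Kw dw ds k) * 2 powr (- real F * s)) ^ card (I j)
          = (real (Q j) - 1) powr s * aj s j ^ lsl j" by simp
      qed simp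
      also have "\<dots> \<le> (\<Sum>j\<in>Js. (real (Q j) - 1) powr s * aj s j ^ lsl j)"
        using finJs aj_nonneg[OF dd] by (intro sum_mono2) auto
      finally show "(\<Sum>j\<in>{j\<in>Js. k \<in> Sr j}. (real (Q j) - 1) powr s *
          (erasure_prob Kw dw ds k + (1 - erasure_prob Kw dw ds k) * 2 powr (- real F * s)) ^ card (I j))
          \<le> (\<Sum>j\<in>Js. (real (Q j) - 1) powr s * aj s j ^ lsl j)" .
    qed
    also have "\<dots> = real (Kw+Ks) * TJ s" by simp
    finally show ?thesis using fp by (intro exI[of _ fd] exI[of _ phid]) auto
  qed
  define P where "P d fd phid \<longleftrightarrow> (\<forall>w\<in>W. \<forall>t<n. length (fd w t) = F) \<and>
       error_prob Kw Ks D E n R g (\<lambda>_. fd) (\<lambda>_. phid) d \<le> real (Kw+Ks) * TJ s" for d fd phid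
  have "\<forall>d\<in>demand_set (Kw+Ks) D. \<exists>fp. P d (fst fp) (snd fp)"
  proof
    fix d assume d: "d \<in> demand_set (Kw+Ks) D"
    obtain fd phid where "P d fd phid" using one[OF d] unfolding P_def by blast
    then show "\<exists>fp. P d (fst fp) (snd fp)" by (intro exI[of _ "(fd, phid)"]) simp
  qed
  from bchoice[OF this] obtain sel where sel0: "\<forall>d\<in>demand_set (Kw+Ks) D. P d (fst (sel d)) (snd (sel d))" by blast
  define fsel where "fsel d = fst (sel d)" for d
  define phisel where "phisel d = snd (sel d)" for d
  have sel: "\<And>d. d \<in> demand_set (Kw+Ks) D \<Longrightarrow> (\<forall>w\<in>W. \<forall>t<n. length (fsel d w t) = F) \<and>
       error_prob Kw Ks D E n R g (\<lambda>_. fsel d) (\<lambda>_. phisel d) d \<le> real (Kw+Ks) * TJ s"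
    using sel0 unfolding P_def fsel_def phisel_def by blast
  have eq: "error_prob Kw Ks D E n R g fsel phisel d = error_prob Kw Ks D E n R g (\<lambda>_. fsel d) (\<lambda>_. phisel d) d" for d
    unfolding error_prob_def by (rule refl)
  have "(\<forall>d\<in>demand_set (Kw+Ks) D. \<forall>w\<in>W. \<forall>t<n. length (fsel d w t) = F) \<and>
      (\<forall>d\<in>demand_set (Kw+Ks) D. error_prob Kw Ks D E n R g fsel phisel d \<le> real (Kw+Ks) * TJ s)"
    unfolding eq using sel by blast
  then show ?thesis by blast
qed

end

lemma ev_lin:
  fixes a c :: real
  assumes "0 < a"
  shows "eventually (\<lambda>n. c \<le> a * real n) sequentially"
proof -
  obtain N :: nat where N: "c / a < real N" using reals_Archimedean2 by blast
  show ?thesis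
  proof (rule eventually_sequentiallyI[of N])
    fix n assume "N \<le> n"
    then have "real N \<le> real n" by simp
    then have "c / a < real n" using N by simp
    then show "c \<le> a * real n" using assms by (simp add: field_simps)
  qed
qed

locale params =
  fixes Kw Ks D F :: nat and dw ds M :: real and E :: "nat set pmf" and lam :: "nat \<Rightarrow> real" and \<eta> :: real
  assumes Kw1: "1 \<le> Kw" and Ks1: "1 \<le> Ks" and F1: "1 \<le> F"
    and ds0: "0 < ds" and dsw: "ds \<le> dw" and dw1: "dw < 1"
    and law: "valid_erasure_law Kw Ks dw ds E"
    and M0: "0 \<le> M"
    and lam0: "\<forall>t\<in>{0..Kw}. 0 \<le> lam t"
    and lam1: "(\<Sum>t=0..Kw. lam t) = 1"
    and lamM: "(\<Sum>t=0..Kw. lam t * M_sep Kw Ks D F dw ds t) = M"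
    and eta: "0 < \<eta>" "\<eta> < 1/2"
begin

definition "Rt t = R_sep Kw Ks F dw ds t"
definition "L = (\<Sum>t=0..Kw. lam t * Rt t)"
definition "R = (1 - 2 * \<eta>) * L"
definition "\<beta> t = (1 - \<eta>) * lam t * Rt t / real (Kw choose t)"
definition "b n t = nat \<lfloor>\<beta> t * real n\<rfloor>"
definition "cw = (1 + \<eta>) / (real F * (1 - dw))"
definition "lw n u = nat \<lceil>real (b n u) * cw\<rceil>"
definition "ls n = nat \<lceil>real n * R * (1 + \<eta>) / (real F * (1 - ds))\<rceil>"
definition "den t = (real Kw - real t) / ((real t + 1) * (1 - dw)) + real Ks / (1 - ds)"

lemma den_pos: "t \<le> Kw \<Longrightarrow> 0 < den t"
proof -
  assume t: "t \<le> Kw"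
  have "0 \<le> (real Kw - real t) / ((real t + 1) * (1 - dw))" using t dw1 by simp
  moreover have "0 < real Ks / (1 - ds)" using Ks1 dsw dw1 by simp
  ultimately show ?thesis unfolding den_def by linarith
qed

lemma Rt_eq: "Rt t = real F / den t" unfolding Rt_def R_sep_def den_def by simp

lemma Rt_pos: "t \<le> Kw \<Longrightarrow> 0 < Rt t" using den_pos F1 unfolding Rt_eq by simp

lemma Rt_den: "t \<le> Kw \<Longrightarrow> Rt t * den t = real F" using den_pos[of t] unfolding Rt_eq by simp

lemma lamRt_nonneg: "t \<le> Kw \<Longrightarrow> 0 \<le> lam t * Rt t"
  using lam0 Rt_pos[of t] by simp

lemma L_pos: "0 < L"
proof -
  have "\<exists>t\<in>{0..Kw}. lam t \<noteq> 0"
  proof (rule ccontr)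
    assume "\<not> ?thesis" then have "(\<Sum>t=0..Kw. lam t) = 0" by simp
    then show False using lam1 by simp
  qed
  then obtain t where t: "t \<in> {0..Kw}" "lam t \<noteq> 0" by blast
  then have lt: "0 < lam t * Rt t" using lam0 Rt_pos[of t] by (simp add: order.not_eq_order_implies_strict)
  have "lam t * Rt t \<le> L" unfolding L_def
    using t lamRt_nonneg by (intro member_le_sum) auto
  then show ?thesis using lt by simp
qed

lemma R_pos: "0 < R" unfolding R_def using L_pos eta by simp

lemma beta_nonneg: "t \<le> Kw \<Longrightarrow> 0 \<le> \<beta> t"
  unfolding \<beta>_def using lam0 Rt_pos[of t] eta by (auto intro!: divide_nonneg_nonneg mult_nonneg_nonneg)

lemma choose_pos: "t \<le> Kw \<Longrightarrow> 0 < real (Kw choose t)" by simp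

lemma beta_choose: "t \<le> Kw \<Longrightarrow> real (Kw choose t) * \<beta> t = (1 - \<eta>) * lam t * Rt t"
  unfolding \<beta>_def using choose_pos[of t] by simp

lemma b_le: "t \<le> Kw \<Longrightarrow> real (b n t) \<le> \<beta> t * real n"
  unfolding b_def using beta_nonneg[of t] by (simp add: of_nat_nat)

lemma b_ge: "t \<le> Kw \<Longrightarrow> \<beta> t * real n - 1 \<le> real (b n t)"
proof -
  assume t: "t \<le> Kw"
  have "0 \<le> \<beta> t * real n" using beta_nonneg[OF t] by simp
  then show ?thesis unfolding b_def by (simp add: of_nat_nat)
qed

lemma sumb_real: "real (\<Sum>T\<in>Pow {1..Kw}. b n (card T)) = (\<Sum>t=0..Kw. real (Kw choose t) * real (b n t))"
proof -
  have "real (\<Sum>T\<in>Pow {1..Kw}. b n (card T)) = (\<Sum>T\<in>Pow {1..Kw}. real (b n (card T)))" by simp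
  also have "\<dots> = (\<Sum>t=0..card {1..Kw}. real (card {1..Kw} choose t) * real (b n t))"
    by (rule sum_pow_card) simp
  finally show ?thesis by simp
qed

lemma C1: "eventually (\<lambda>n. num_msgs n R \<le> 2 ^ (\<Sum>T\<in>Pow {1..Kw}. b n (card T))) sequentially"
proof -
  have ev: "eventually (\<lambda>n. (\<Sum>t=0..Kw. real (Kw choose t)) \<le> (\<eta> * L) * real n) sequentially"
    using eta L_pos by (intro ev_lin) simp
  show ?thesis using ev
  proof (rule eventually_mono)
    fix n assume n: "(\<Sum>t=0..Kw. real (Kw choose t)) \<le> (\<eta> * L) * real n"
    have "(\<Sum>t=0..Kw. real (Kw choose t) * (\<beta> t * real n - 1)) \<le> (\<Sum>t=0..Kw. real (Kw choose t) * real (b n t))"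
      using b_ge by (intro sum_mono mult_left_mono) auto
    moreover have "(\<Sum>t=0..Kw. real (Kw choose t) * (\<beta> t * real n - 1))
        = real n * ((1 - \<eta>) * L) - (\<Sum>t=0..Kw. real (Kw choose t))"
    proof -
      have "(\<Sum>t=0..Kw. real (Kw choose t) * (\<beta> t * real n - 1))
          = (\<Sum>t=0..Kw. real n * ((1 - \<eta>) * (lam t * Rt t)) - real (Kw choose t))"
      proof (intro sum.cong refl)
        fix t assume t: "t \<in> {0..Kw}"
        have "real (Kw choose t) * (\<beta> t * real n - 1) = (real (Kw choose t) * \<beta> t) * real n - real (Kw choose t)"
          by (simp add: algebra_simps)
        also have "\<dots> = real n * ((1 - \<eta>) * (lam t * Rt t)) - real (Kw choose t)"
          using beta_choose[of t] t by simp
        finally show "real (Kw choose t) * (\<beta> t * real n - 1) = real n * ((1 - \<eta>) * (lam t * Rt t)) - real (Kw choose t)" .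
      qed
      also have "\<dots> = real n * ((1 - \<eta>) * L) - (\<Sum>t=0..Kw. real (Kw choose t))"
        unfolding L_def by (simp add: sum_subtractf sum_distrib_left)
      finally show ?thesis .
    qed
    ultimately have "real n * R \<le> real (\<Sum>T\<in>Pow {1..Kw}. b n (card T))"
      unfolding sumb_real R_def using n by (simp add: algebra_simps)
    then have "2 powr (real n * R) \<le> 2 powr real (\<Sum>T\<in>Pow {1..Kw}. b n (card T))" by simp
    also have "\<dots> = 2 ^ (\<Sum>T\<in>Pow {1..Kw}. b n (card T))" by (rule powr_realpow) simp
    finally have h: "2 powr (real n * R) \<le> 2 ^ (\<Sum>T\<in>Pow {1..Kw}. b n (card T))" .
    have "real (num_msgs n R) \<le> 2 powr (real n * R)"
      unfolding num_msgs_def by (simp add: of_nat_nat)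
    then have "real (num_msgs n R) \<le> 2 ^ (\<Sum>T\<in>Pow {1..Kw}. b n (card T))" using h by (rule order_trans)
    moreover have "(2::real) ^ (\<Sum>T\<in>Pow {1..Kw}. b n (card T)) = real ((2::nat) ^ (\<Sum>T\<in>Pow {1..Kw}. b n (card T)))"
      by (simp only: of_nat_power of_nat_numeral)
    ultimately show "num_msgs n R \<le> 2 ^ (\<Sum>T\<in>Pow {1..Kw}. b n (card T))" by (simp only: of_nat_le_iff)
  qed
qed

end

lemma sum_pow_ne:
  assumes "finite A"
  shows "(\<Sum>S\<in>{S\<in>Pow A. S \<noteq> {}}. f (card S - 1)) = (\<Sum>u=0..card A. real (card A choose Suc u) * (f u :: real))"
proof -
  define n where "n = card A"
  define g where "g t = (if t = 0 then 0 else f (t - 1))" for t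
  have "(\<Sum>S\<in>{S\<in>Pow A. S \<noteq> {}}. f (card S - 1)) = (\<Sum>S\<in>Pow A. if S \<noteq> {} then f (card S - 1) else 0)"
    using sum.inter_filter[of "Pow A" "\<lambda>S. f (card S - 1)" "\<lambda>S. S \<noteq> {}"] assms by simp
  also have "\<dots> = (\<Sum>S\<in>Pow A. g (card S))"
  proof (intro sum.cong refl)
    fix S assume "S \<in> Pow A"
    then have "finite S" using assms by (auto intro: rev_finite_subset)
    then show "(if S \<noteq> {} then f (card S - 1) else 0) = g (card S)" unfolding g_def by simp
  qed
  also have "\<dots> = (\<Sum>t=0..n. real (n choose t) * g t)" unfolding n_def by (rule sum_pow_card[OF assms])
  also have "\<dots> = (\<Sum>t=Suc 0..n. real (n choose t) * g t)"
    by (simp add: sum.atLeast_Suc_atMost g_def)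
  also have "\<dots> = (\<Sum>t=Suc 0..Suc n. real (n choose t) * g t)"
    by (simp add: sum.cl_ivl_Suc)
  also have "\<dots> = (\<Sum>u=0..n. real (n choose Suc u) * g (Suc u))"
    by (rule sum.shift_bounds_cl_Suc_ivl)
  also have "\<dots> = (\<Sum>u=0..n. real (n choose Suc u) * f u)" unfolding g_def by simp
  finally show ?thesis unfolding n_def .
qed

context params begin

lemma binom_ratio2: "u \<le> Kw \<Longrightarrow> real (Kw choose Suc u) * (real u + 1) = real (Kw choose u) * (real Kw - real u)"
proof -
  assume u: "u \<le> Kw"
  show ?thesis
  proof (cases "u < Kw")
    case True then show ?thesis using binom_ratio[OF True] by (simp add: add.commute)
  next
    case False then have "u = Kw" using u by simp
    then show ?thesis by simp
  qed
qed

lemma cache_sum: "i \<in> {1..Kw} \<Longrightarrow>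
   real D * (\<Sum>T\<in>{T\<in>Pow {1..Kw}. i \<in> T}. \<beta> (card T)) = (1 - \<eta>) * M"
proof -
  assume i: "i \<in> {1..Kw}"
  have "(\<Sum>T\<in>{T\<in>Pow {1..Kw}. i \<in> T}. \<beta> (card T)) = (\<Sum>t=0..Kw - 1. real ((Kw - 1) choose t) * \<beta> (Suc t))"
    using sum_pow_card_mem[of "{1..Kw}" i \<beta>] i by simp
  also have "\<dots> = (\<Sum>t=0..Kw - 1. (real (Suc t) / real Kw) * ((1 - \<eta>) * lam (Suc t) * Rt (Suc t)))"
  proof (intro sum.cong refl)
    fix t assume t: "t \<in> {0..Kw - 1}"
    then have tK: "Suc t \<le> Kw" using Kw1 by auto
    have "real (Suc t) * real (Kw choose Suc t) = real Kw * real ((Kw - 1) choose t)"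
      using times_binomial_minus1_eq[of "Suc t" Kw] by (simp only: of_nat_mult[symmetric]) simp
    then have "real ((Kw - 1) choose t) = real (Suc t) / real Kw * real (Kw choose Suc t)"
      using Kw1 by (simp add: field_simps)
    then show "real ((Kw - 1) choose t) * \<beta> (Suc t) = (real (Suc t) / real Kw) * ((1 - \<eta>) * lam (Suc t) * Rt (Suc t))"
      using beta_choose[OF tK] by (simp add: mult.assoc)
  qed
  finally have s1: "(\<Sum>T\<in>{T\<in>Pow {1..Kw}. i \<in> T}. \<beta> (card T)) = (\<Sum>t=0..Kw - 1. (real (Suc t) / real Kw) * ((1 - \<eta>) * lam (Suc t) * Rt (Suc t)))" .
  have "real D * (\<Sum>t=0..Kw - 1. (real (Suc t) / real Kw) * ((1 - \<eta>) * lam (Suc t) * Rt (Suc t)))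
      = (1 - \<eta>) * (\<Sum>t=0..Kw - 1. lam (Suc t) * M_sep Kw Ks D F dw ds (Suc t))"
    unfolding sum_distrib_left M_sep_def Rt_def using Kw1 by (intro sum.cong refl) (simp add: field_simps)
  also have "(\<Sum>t=0..Kw - 1. lam (Suc t) * M_sep Kw Ks D F dw ds (Suc t)) = (\<Sum>t=Suc 0..Suc (Kw - 1). lam t * M_sep Kw Ks D F dw ds t)"
    by (rule sum.shift_bounds_cl_Suc_ivl[symmetric])
  also have "Suc (Kw - 1) = Kw" using Kw1 by simp
  also have "(\<Sum>t=Suc 0..Kw. lam t * M_sep Kw Ks D F dw ds t) = M"
    using lamM Kw1 by (simp add: sum.atLeast_Suc_atMost M_sep_def)
  finally show ?thesis using s1 by simp
qed

lemma C2: "i \<in> {1..Kw} \<Longrightarrow> 2 ^ (D * (\<Sum>T\<in>{T\<in>Pow {1..Kw}. i \<in> T}. b n (card T))) \<le> num_msgs n M"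
proof -
  assume i: "i \<in> {1..Kw}"
  let ?k = "D * (\<Sum>T\<in>{T\<in>Pow {1..Kw}. i \<in> T}. b n (card T))"
  have "real ?k = real D * (\<Sum>T\<in>{T\<in>Pow {1..Kw}. i \<in> T}. real (b n (card T)))" by simp
  also have "\<dots> \<le> real D * (\<Sum>T\<in>{T\<in>Pow {1..Kw}. i \<in> T}. \<beta> (card T) * real n)"
  proof (intro mult_left_mono sum_mono)
    fix T assume "T \<in> {T\<in>Pow {1..Kw}. i \<in> T}"
    then have "card T \<le> Kw" using card_mono[of "{1..Kw}" T] by auto
    then show "real (b n (card T)) \<le> \<beta> (card T) * real n" by (rule b_le)
  qed simp
  also have "\<dots> = real n * (real D * (\<Sum>T\<in>{T\<in>Pow {1..Kw}. i \<in> T}. \<beta> (card T)))"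
    by (simp add: sum_distrib_left sum_distrib_right mult_ac)
  also have "\<dots> = real n * ((1 - \<eta>) * M)" using cache_sum[OF i] by simp
  also have "\<dots> \<le> real n * M"
  proof -
    have "0 \<le> \<eta> * M" using M0 eta by simp
    then have "(1 - \<eta>) * M \<le> M" by (simp add: algebra_simps)
    then show ?thesis by (intro mult_left_mono) auto
  qed
  finally have k: "real ?k \<le> real n * M" .
  have "(2::real) ^ ?k = 2 powr real ?k" by (rule powr_realpow[symmetric]) simp
  also have "\<dots> \<le> 2 powr (real n * M)" using k by simp
  finally have "(2::real) ^ ?k \<le> 2 powr (real n * M)" .
  then have "\<lfloor>(2::real) ^ ?k\<rfloor> \<le> \<lfloor>2 powr (real n * M)\<rfloor>" by (rule floor_mono)
  then have "(2::int) ^ ?k \<le> \<lfloor>2 powr (real n * M)\<rfloor>" by simp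
  then have "nat ((2::int) ^ ?k) \<le> nat \<lfloor>2 powr (real n * M)\<rfloor>" by (rule nat_mono)
  then show ?thesis unfolding num_msgs_def by (simp add: nat_power_eq)
qed

end

context params begin

definition "W1 = (\<Sum>u=0..Kw. lam u * Rt u * ((real Kw - real u) / ((real u + 1) * (1 - dw))))"
definition "W2 = L * real Ks / (1 - ds)"

lemma W12: "W1 + W2 = real F"
proof -
  have e2: "W2 = (\<Sum>u=0..Kw. lam u * Rt u * (real Ks / (1 - ds)))"
    unfolding W2_def L_def by (simp add: sum_distrib_right sum_divide_distrib)
  have "W1 + W2 = (\<Sum>u=0..Kw. lam u * Rt u * ((real Kw - real u) / ((real u + 1) * (1 - dw))) + lam u * Rt u * (real Ks / (1 - ds)))"
    unfolding e2 W1_def by (simp add: sum.distrib)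
  also have "\<dots> = (\<Sum>u=0..Kw. lam u * (Rt u * den u))"
    unfolding den_def by (intro sum.cong refl) (simp add: distrib_left mult.assoc)
  also have "\<dots> = (\<Sum>u=0..Kw. lam u * real F)" by (intro sum.cong refl) (simp add: Rt_den)
  also have "\<dots> = real F" using lam1 by (simp add: sum_distrib_right[symmetric])
  finally show ?thesis .
qed

lemma W2_nonneg: "0 \<le> W2" unfolding W2_def using L_pos dsw dw1 by simp

lemma lw_le: "u \<le> Kw \<Longrightarrow> real (lw n u) \<le> \<beta> u * real n * cw + 1"
proof -
  assume u: "u \<le> Kw"
  have cw0: "0 \<le> cw" unfolding cw_def using eta dw1 by simp
  have "real (lw n u) \<le> real (b n u) * cw + 1"
    unfolding lw_def using cw0 by (simp add: of_nat_nat)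
  also have "\<dots> \<le> \<beta> u * real n * cw + 1" using b_le[OF u] cw0 by (simp add: mult_right_mono)
  finally show ?thesis .
qed

lemma ls_le: "real (ls n) \<le> real n * R * (1 + \<eta>) / (real F * (1 - ds)) + 1"
proof -
  have "0 \<le> real n * R * (1 + \<eta>) / (real F * (1 - ds))" using R_pos eta dsw dw1 by simp
  then show ?thesis unfolding ls_def by (simp add: of_nat_nat)
qed

lemma C3: "eventually (\<lambda>n. (\<Sum>S\<in>{S\<in>Pow {1..Kw}. S \<noteq> {}}. lw n (card S - 1)) + Ks * ls n \<le> n) sequentially"
proof -
  define C0 where "C0 = (\<Sum>u=0..Kw. real (Kw choose Suc u)) + real Ks"
  have ev: "eventually (\<lambda>n. C0 \<le> (\<eta> * \<eta>) * real n) sequentially"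
    using eta by (intro ev_lin) simp
  show ?thesis using ev
  proof (rule eventually_mono)
    fix n assume n: "C0 \<le> (\<eta> * \<eta>) * real n"
    have s1: "real (\<Sum>S\<in>{S\<in>Pow {1..Kw}. S \<noteq> {}}. lw n (card S - 1))
        = (\<Sum>u=0..Kw. real (Kw choose Suc u) * real (lw n u))"
      using sum_pow_ne[of "{1..Kw}" "\<lambda>u. real (lw n u)"] by simp
    also have "\<dots> \<le> (\<Sum>u=0..Kw. real (Kw choose Suc u) * (\<beta> u * real n * cw + 1))"
      using lw_le by (intro sum_mono mult_left_mono) auto
    also have "\<dots> = real n * cw * (\<Sum>u=0..Kw. real (Kw choose Suc u) * \<beta> u) + (\<Sum>u=0..Kw. real (Kw choose Suc u))"
      by (simp add: sum.distrib sum_distrib_left algebra_simps)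
    also have "(\<Sum>u=0..Kw. real (Kw choose Suc u) * \<beta> u) = (1 - \<eta>) * (1 - dw) * W1"
    proof -
      have "(\<Sum>u=0..Kw. real (Kw choose Suc u) * \<beta> u)
          = (\<Sum>u=0..Kw. (1 - \<eta>) * (1 - dw) * (lam u * Rt u * ((real Kw - real u) / ((real u + 1) * (1 - dw)))))"
      proof (intro sum.cong refl)
        fix u assume u: "u \<in> {0..Kw}"
        then have uK: "u \<le> Kw" by simp
        have "real (Kw choose Suc u) = real (Kw choose u) * (real Kw - real u) / (real u + 1)"
          using binom_ratio2[OF uK] by (simp add: field_simps)
        then have "real (Kw choose Suc u) * \<beta> u = (real (Kw choose u) * \<beta> u) * (real Kw - real u) / (real u + 1)"
          by simp
        also have "\<dots> = (1 - \<eta>) * lam u * Rt u * (real Kw - real u) / (real u + 1)"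
          using beta_choose[OF uK] by simp
        also have "\<dots> = (1 - \<eta>) * (1 - dw) * (lam u * Rt u * ((real Kw - real u) / ((real u + 1) * (1 - dw))))"
          using dw1 by simp
        finally show "real (Kw choose Suc u) * \<beta> u = (1 - \<eta>) * (1 - dw) * (lam u * Rt u * ((real Kw - real u) / ((real u + 1) * (1 - dw))))" .
      qed
      also have "\<dots> = (1 - \<eta>) * (1 - dw) * W1" unfolding W1_def by (simp add: sum_distrib_left)
      finally show ?thesis .
    qed
    finally have A0: "real (\<Sum>S\<in>{S\<in>Pow {1..Kw}. S \<noteq> {}}. lw n (card S - 1))
        \<le> real n * cw * ((1 - \<eta>) * (1 - dw) * W1) + (\<Sum>u=0..Kw. real (Kw choose Suc u))" .
    have "real n * cw * ((1 - \<eta>) * (1 - dw) * W1) = real n * ((1 + \<eta>) * (1 - \<eta>) / real F) * W1"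
    proof -
      have "cw * (1 - dw) = (1 + \<eta>) / real F" unfolding cw_def using dw1 by simp
      moreover have "real n * cw * ((1 - \<eta>) * (1 - dw) * W1) = real n * (cw * (1 - dw)) * (1 - \<eta>) * W1"
        by (simp only: mult_ac)
      ultimately show ?thesis by simp
    qed
    then have A: "real (\<Sum>S\<in>{S\<in>Pow {1..Kw}. S \<noteq> {}}. lw n (card S - 1))
        \<le> real n * ((1 + \<eta>) * (1 - \<eta>) / real F) * W1 + (\<Sum>u=0..Kw. real (Kw choose Suc u))"
      using A0 by simp
    have B: "real (Ks * ls n) \<le> real n * ((1 + \<eta>) * (1 - 2 * \<eta>) / real F) * W2 + real Ks"
    proof -
      have "real (Ks * ls n) = real Ks * real (ls n)" by simp
      also have "\<dots> \<le> real Ks * (real n * R * (1 + \<eta>) / (real F * (1 - ds)) + 1)"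
        using ls_le by (intro mult_left_mono) auto
      also have "\<dots> = real n * ((1 + \<eta>) * (1 - 2 * \<eta>) / real F) * W2 + real Ks"
        unfolding W2_def R_def using dsw dw1 F1 by (simp add: field_simps)
      finally show ?thesis .
    qed
    have "real n * ((1 + \<eta>) * (1 - 2 * \<eta>) / real F) * W2 \<le> real n * ((1 + \<eta>) * (1 - \<eta>) / real F) * W2"
      using eta W2_nonneg F1 by (intro mult_right_mono mult_left_mono divide_right_mono) auto
    moreover have "real n * ((1 + \<eta>) * (1 - \<eta>) / real F) * W1 + real n * ((1 + \<eta>) * (1 - \<eta>) / real F) * W2
        = real n * (1 - \<eta> * \<eta>)"
    proof -
      have "real n * ((1 + \<eta>) * (1 - \<eta>) / real F) * W1 + real n * ((1 + \<eta>) * (1 - \<eta>) / real F) * W2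
          = real n * ((1 + \<eta>) * (1 - \<eta>) / real F) * (W1 + W2)" by (simp add: algebra_simps)
      also have "\<dots> = real n * (1 - \<eta> * \<eta>)"
      proof -
        have "real F \<noteq> 0" using F1 by simp
        then show ?thesis unfolding W12 by (simp add: field_simps)
      qed
      finally show ?thesis .
    qed
    ultimately have "real (\<Sum>S\<in>{S\<in>Pow {1..Kw}. S \<noteq> {}}. lw n (card S - 1)) + real (Ks * ls n) \<le> real n * (1 - \<eta> * \<eta>) + C0"
      using A B unfolding C0_def by linarith
    also have "\<dots> \<le> real n" using n by (simp add: algebra_simps)
    finally show "(\<Sum>S\<in>{S\<in>Pow {1..Kw}. S \<noteq> {}}. lw n (card S - 1)) + Ks * ls n \<le> n"
      by (simp only: of_nat_add[symmetric] of_nat_le_iff)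
  qed
qed

end

lemma geo_lim:
  fixes a C :: real
  assumes "0 < a"
  shows "(\<lambda>n::nat. C * 2 powr (- a * real n)) \<longlonglongrightarrow> 0"
proof -
  have eq: "2 powr (- a * real n) = (2 powr (- a)) ^ n" for n
    by (simp add: powr_realpow[symmetric] powr_powr)
  have "2 powr (- a) < 2 powr 0" using assms by (intro powr_less_mono) auto
  then have "norm (2 powr (- a)) < 1" by simp
  then have "(\<lambda>n. (2 powr (- a)) ^ n) \<longlonglongrightarrow> 0" by (rule LIMSEQ_power_zero)
  then have "(\<lambda>n. C * (2 powr (- a)) ^ n) \<longlonglongrightarrow> C * 0" by (intro tendsto_mult tendsto_const)
  then show ?thesis unfolding eq by simp
qed

lemma ceil_nat_ge: "(x::real) \<le> real (nat \<lceil>x\<rceil>)"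
proof (cases "0 \<le> x")
  case True
  then have "0 \<le> \<lceil>x\<rceil>" by simp
  then have "real (nat \<lceil>x\<rceil>) = real_of_int \<lceil>x\<rceil>" by (rule of_nat_nat)
  then show ?thesis by (simp add: le_of_int_ceiling)
next
  case False
  then show ?thesis by (meson linorder_not_le of_nat_0_le_iff order.trans less_imp_le)
qed

context params begin

definition "\<kappa> = \<eta> / (2 + \<eta>)"
definition "aw s = dw + (1 - dw) * 2 powr (- real F * s)"
definition "as s = ds + (1 - ds) * 2 powr (- real F * s)"
definition "G s n u = (if b n u = 0 then 0 else 2 powr (- s * real (b n u) * \<kappa>))"

lemma kappa_pos: "0 < \<kappa>" unfolding \<kappa>_def using eta by simp

lemma s_exists: "\<exists>s. 0 < s \<and> s \<le> 1 \<and> aw s \<le> 2 powr (- real F * s * ((1 - dw) / (1 + \<eta>/2)))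
                    \<and> as s \<le> 2 powr (- real F * s * ((1 - ds) / (1 + \<eta>/2)))"
proof -
  have Fp: "0 < real F" using F1 by simp
  have c1: "(1 - dw) / (1 + \<eta>/2) < 1 - dw" using dw1 eta by (simp add: divide_less_eq)
  have c2: "(1 - ds) / (1 + \<eta>/2) < 1 - ds" using dsw dw1 eta by (simp add: divide_less_eq)
  obtain d1 where d1: "d1 > 0" "\<forall>s. 0 < s \<and> s < d1 \<longrightarrow> dw + (1 - dw) * 2 powr (- real F * s) < 2 powr (- real F * s * ((1 - dw) / (1 + \<eta>/2)))"
    using exists_s[of dw "(1 - dw) / (1 + \<eta>/2)" "real F"] ds0 dsw dw1 eta c1 Fp by auto
  obtain d2 where d2: "d2 > 0" "\<forall>s. 0 < s \<and> s < d2 \<longrightarrow> ds + (1 - ds) * 2 powr (- real F * s) < 2 powr (- real F * s * ((1 - ds) / (1 + \<eta>/2)))"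
    using exists_s[of ds "(1 - ds) / (1 + \<eta>/2)" "real F"] ds0 dsw dw1 eta c2 Fp by auto
  define s where "s = min 1 (min (d1/2) (d2/2))"
  have s: "0 < s" "s \<le> 1" "s < d1" "s < d2" unfolding s_def using d1 d2 by auto
  show ?thesis using s d1(2) d2(2) unfolding aw_def as_def by (intro exI[of _ s]) (auto intro: less_imp_le)
qed

lemma weak_term:
  assumes s: "0 < s" "s \<le> 1" and saw: "aw s \<le> 2 powr (- real F * s * ((1 - dw) / (1 + \<eta>/2)))"
    and u: "u \<le> Kw"
  shows "(real (2 ^ b n u :: nat) - 1) powr s * aw s ^ lw n u \<le> G s n u"
proof (cases "b n u = 0")
  case True then show ?thesis unfolding G_def by simp
next
  case False
  have B: "0 \<le> real (b n u)" by simp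
  have X: "0 \<le> real (2 ^ b n u :: nat) - 1" by simp
  have X2: "real (2 ^ b n u :: nat) - 1 \<le> 2 powr real (b n u)"
    by (simp add: powr_realpow)
  have l: "real (b n u) * (1 + \<eta>) / (real F * (1 - dw)) \<le> real (lw n u)"
  proof -
    have "real (b n u) * (1 + \<eta>) / (real F * (1 - dw)) = real (b n u) * cw" unfolding cw_def by simp
    also have "\<dots> \<le> real (lw n u)" unfolding lw_def by (rule ceil_nat_ge)
    finally show ?thesis .
  qed
  have "(real (2 ^ b n u :: nat) - 1) powr s * aw s ^ lw n u \<le> 2 powr (- s * real (b n u) * (\<eta> / (2 + \<eta>)))"
    by (rule term_bound[OF _ dw1 s _ eta(1) _ saw X X2 B l]) (use F1 ds0 dsw in \<open>auto simp: aw_def\<close>)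
  then show ?thesis using False unfolding G_def \<kappa>_def by simp
qed

lemma strong_term:
  assumes s: "0 < s" "s \<le> 1" and sas: "as s \<le> 2 powr (- real F * s * ((1 - ds) / (1 + \<eta>/2)))"
  shows "(real (num_msgs n R + 1) - 1) powr s * as s ^ ls n \<le> 2 powr (- s * (real n * R) * \<kappa>)"
proof -
  have B: "0 \<le> real n * R" using R_pos by simp
  have X: "0 \<le> real (num_msgs n R)" by simp
  have X2: "real (num_msgs n R) \<le> 2 powr (real n * R)" unfolding num_msgs_def by (simp add: of_nat_nat)
  have l: "real n * R * (1 + \<eta>) / (real F * (1 - ds)) \<le> real (ls n)"
    unfolding ls_def by (rule ceil_nat_ge)
  have "real (num_msgs n R) powr s * as s ^ ls n \<le> 2 powr (- s * (real n * R) * (\<eta> / (2 + \<eta>)))"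
    by (rule term_bound[OF _ _ s _ eta(1) _ sas X X2 B l]) (use F1 ds0 dsw dw1 in \<open>auto simp: as_def\<close>)
  then show ?thesis unfolding \<kappa>_def by simp
qed

lemma G_lim:
  assumes s: "0 < s" and u: "u \<le> Kw"
  shows "(\<lambda>n. G s n u) \<longlonglongrightarrow> 0"
proof (cases "\<beta> u = 0")
  case True
  then have "\<And>n. b n u = 0" unfolding b_def by simp
  then show ?thesis unfolding G_def by simp
next
  case False
  then have bp: "0 < \<beta> u" using beta_nonneg[OF u] by simp
  have up: "G s n u \<le> 2 powr (s * \<kappa>) * 2 powr (- (s * \<kappa> * \<beta> u) * real n)" for n
  proof (cases "b n u = 0")
    case True then show ?thesis unfolding G_def by simp
  next
    case False
    have "- s * real (b n u) * \<kappa> \<le> - s * (\<beta> u * real n - 1) * \<kappa>"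
      using b_ge[OF u, of n] s kappa_pos by (simp add: mult_le_cancel_left mult_le_cancel_right)
    then have "2 powr (- s * real (b n u) * \<kappa>) \<le> 2 powr (- s * (\<beta> u * real n - 1) * \<kappa>)" by simp
    also have "- s * (\<beta> u * real n - 1) * \<kappa> = s * \<kappa> + - (s * \<kappa> * \<beta> u) * real n" by (simp add: algebra_simps)
    also have "2 powr (s * \<kappa> + - (s * \<kappa> * \<beta> u) * real n) = 2 powr (s * \<kappa>) * 2 powr (- (s * \<kappa> * \<beta> u) * real n)"
      by (rule powr_add)
    finally show ?thesis using False unfolding G_def by simp
  qed
  have lo: "0 \<le> G s n u" for n unfolding G_def by simp
  have "(\<lambda>n. 2 powr (s * \<kappa>) * 2 powr (- (s * \<kappa> * \<beta> u) * real n)) \<longlonglongrightarrow> 0"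
    using s kappa_pos bp by (intro geo_lim) simp
  then show ?thesis
    by (intro tendsto_sandwich[of "\<lambda>_. 0" "\<lambda>n. G s n u" sequentially "\<lambda>n. 2 powr (s * \<kappa>) * 2 powr (- (s * \<kappa> * \<beta> u) * real n)"])
       (use lo up in auto)
qed

end

context params begin

lemma card_FV: "card (PiE (Pow {1..Kw}) (\<lambda>T. {..<(2::nat) ^ b n (card T)})) = 2 ^ (\<Sum>T\<in>Pow {1..Kw}. b n (card T))"
  by (simp add: card_PiE power_sum)

lemma card_CV: "card (PiE ({1..D} \<times> {T\<in>Pow {1..Kw}. i \<in> T}) (\<lambda>(d', T). {..<(2::nat) ^ b n (card T)}))
   = 2 ^ (D * (\<Sum>T\<in>{T\<in>Pow {1..Kw}. i \<in> T}. b n (card T)))"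
proof -
  have "card (PiE ({1..D} \<times> {T\<in>Pow {1..Kw}. i \<in> T}) (\<lambda>(d', T). {..<(2::nat) ^ b n (card T)}))
      = (\<Prod>x\<in>{1..D} \<times> {T\<in>Pow {1..Kw}. i \<in> T}. 2 ^ b n (card (snd x)))"
    by (simp add: card_PiE case_prod_beta)
  also have "\<dots> = 2 ^ (\<Sum>x\<in>{1..D} \<times> {T\<in>Pow {1..Kw}. i \<in> T}. b n (card (snd x)))"
    by (simp add: power_sum)
  also have "(\<Sum>x\<in>{1..D} \<times> {T\<in>Pow {1..Kw}. i \<in> T}. b n (card (snd x))) = D * (\<Sum>T\<in>{T\<in>Pow {1..Kw}. i \<in> T}. b n (card T))"
  proof -
    have "(\<Sum>x\<in>{1..D} \<times> {T\<in>Pow {1..Kw}. i \<in> T}. b n (card (snd x))) = (\<Sum>d'\<in>{1..D}. \<Sum>T\<in>{T\<in>Pow {1..Kw}. i \<in> T}. b n (card T))"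
      by (subst sum.cartesian_product) (simp add: case_prod_beta)
    then show ?thesis by simp
  qed
  finally show ?thesis .
qed

lemma achievable_R: "achievable Kw Ks D F E R M"
proof -
  obtain s where s: "0 < s" "s \<le> 1" and saw: "aw s \<le> 2 powr (- real F * s * ((1 - dw) / (1 + \<eta>/2)))"
    and sas: "as s \<le> 2 powr (- real F * s * ((1 - ds) / (1 + \<eta>/2)))"
    using s_exists by blast
  define PS where "PS = {S\<in>Pow {1..Kw}. S \<noteq> {}}"
  have finPS: "finite PS" unfolding PS_def by simp
  have PScard: "S \<in> PS \<Longrightarrow> card S - 1 \<le> Kw" for S
  proof -
    assume "S \<in> PS"
    then have "card S \<le> card {1..Kw}" unfolding PS_def by (intro card_mono) auto
    then show ?thesis by simp
  qed
  define e where "e n = real (Kw + Ks) * ((\<Sum>S\<in>PS. G s n (card S - 1)) + real Ks * 2 powr (- (s * R * \<kappa>) * real n))" for n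
  have elim: "e \<longlonglongrightarrow> 0"
  proof -
    have "(\<lambda>n. (\<Sum>S\<in>PS. G s n (card S - 1))) \<longlonglongrightarrow> (\<Sum>S\<in>PS. 0)"
      using s PScard by (intro tendsto_sum G_lim) auto
    moreover have "(\<lambda>n. real Ks * 2 powr (- (s * R * \<kappa>) * real n)) \<longlonglongrightarrow> 0"
      using s R_pos kappa_pos by (intro geo_lim) simp
    ultimately have "(\<lambda>n. (\<Sum>S\<in>PS. G s n (card S - 1)) + real Ks * 2 powr (- (s * R * \<kappa>) * real n)) \<longlonglongrightarrow> 0 + 0"
      by (intro tendsto_add) auto
    then have "(\<lambda>n. real (Kw + Ks) * ((\<Sum>S\<in>PS. G s n (card S - 1)) + real Ks * 2 powr (- (s * R * \<kappa>) * real n))) \<longlonglongrightarrow> real (Kw + Ks) * (0 + 0)"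
      by (intro tendsto_mult tendsto_const)
    then show ?thesis unfolding e_def by simp
  qed
  show ?thesis unfolding achievable_def
  proof (intro conjI allI impI)
    show "0 \<le> R" using R_pos by simp
    show "0 \<le> M" by (rule M0)
    fix \<epsilon> :: real assume \<epsilon>: "0 < \<epsilon>"
    have ev1: "eventually (\<lambda>n. e n < \<epsilon>) sequentially" using elim \<epsilon> by (rule order_tendstoD)
    have ev4: "eventually (\<lambda>n. 0 < n) sequentially" by (rule eventually_gt_at_top)
    have "eventually (\<lambda>n. e n < \<epsilon> \<and> num_msgs n R \<le> 2 ^ (\<Sum>T\<in>Pow {1..Kw}. b n (card T))
        \<and> (\<Sum>S\<in>{S\<in>Pow {1..Kw}. S \<noteq> {}}. lw n (card S - 1)) + Ks * ls n \<le> n \<and> 0 < n) sequentially"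
      by (intro eventually_conj ev1 C1 C3 ev4)
    then obtain N where "\<forall>n\<ge>N. e n < \<epsilon> \<and> num_msgs n R \<le> 2 ^ (\<Sum>T\<in>Pow {1..Kw}. b n (card T))
        \<and> (\<Sum>S\<in>{S\<in>Pow {1..Kw}. S \<noteq> {}}. lw n (card S - 1)) + Ks * ls n \<le> n \<and> 0 < n"
      unfolding eventually_sequentially by blast
    then have "e N < \<epsilon> \<and> num_msgs N R \<le> 2 ^ (\<Sum>T\<in>Pow {1..Kw}. b N (card T))
        \<and> (\<Sum>S\<in>{S\<in>Pow {1..Kw}. S \<noteq> {}}. lw N (card S - 1)) + Ks * ls N \<le> N \<and> 0 < N" by blast
    then obtain n where en: "e n < \<epsilon>" and c1: "num_msgs n R \<le> 2 ^ (\<Sum>T\<in>Pow {1..Kw}. b n (card T))"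
      and c3: "(\<Sum>S\<in>{S\<in>Pow {1..Kw}. S \<noteq> {}}. lw n (card S - 1)) + Ks * ls n \<le> n" and n0: "0 < n"
      by blast
    define FV where "FV = PiE (Pow {1..Kw}) (\<lambda>T. {..<(2::nat) ^ b n (card T)})"
    have "card {1..num_msgs n R} \<le> card FV" unfolding FV_def card_FV using c1 by simp
    then obtain enc where enc1: "enc ` {1..num_msgs n R} \<subseteq> FV" and enc2: "inj_on enc {1..num_msgs n R}"
      using card_le_inj[of "{1..num_msgs n R}" FV] unfolding FV_def by (auto intro!: finite_PiE)
    have "\<forall>i\<in>{1..Kw}. \<exists>c. c ` PiE ({1..D} \<times> {T\<in>Pow {1..Kw}. i \<in> T}) (\<lambda>(d', T). {..<(2::nat) ^ b n (card T)}) \<subseteq> {1..num_msgs n M}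
        \<and> inj_on c (PiE ({1..D} \<times> {T\<in>Pow {1..Kw}. i \<in> T}) (\<lambda>(d', T). {..<(2::nat) ^ b n (card T)}))"
    proof
      fix i assume i: "i \<in> {1..Kw}"
      have cardle: "card (PiE ({1..D} \<times> {T\<in>Pow {1..Kw}. i \<in> T}) (\<lambda>(d', T). {..<(2::nat) ^ b n (card T)})) \<le> card {1..num_msgs n M}"
        unfolding card_CV using C2[OF i] by simp
      have fin: "finite (PiE ({1..D} \<times> {T\<in>Pow {1..Kw}. i \<in> T}) (\<lambda>(d', T). {..<(2::nat) ^ b n (card T)}))"
        by (intro finite_PiE) (auto simp: case_prod_beta)
      then show "\<exists>c. c ` PiE ({1..D} \<times> {T\<in>Pow {1..Kw}. i \<in> T}) (\<lambda>(d', T). {..<(2::nat) ^ b n (card T)}) \<subseteq> {1..num_msgs n M}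
        \<and> inj_on c (PiE ({1..D} \<times> {T\<in>Pow {1..Kw}. i \<in> T}) (\<lambda>(d', T). {..<(2::nat) ^ b n (card T)}))"
        using card_le_inj[OF fin finite_atLeastAtMost cardle] by blast
    qed
    from bchoice[OF this] obtain cenc where cenc: "\<forall>i\<in>{1..Kw}. cenc i ` PiE ({1..D} \<times> {T\<in>Pow {1..Kw}. i \<in> T}) (\<lambda>(d', T). {..<(2::nat) ^ b n (card T)}) \<subseteq> {1..num_msgs n M}
        \<and> inj_on (cenc i) (PiE ({1..D} \<times> {T\<in>Pow {1..Kw}. i \<in> T}) (\<lambda>(d', T). {..<(2::nat) ^ b n (card T)}))" by blast
    have manI: "man Kw Ks D dw ds R M E n (b n) (lw n) (ls n) enc cenc"
    proof (rule man.intro)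
      show "valid_erasure_law Kw Ks dw ds E" by (rule law)
      show "\<And>x. x \<in> {1..num_msgs n R} \<Longrightarrow> enc x \<in> PiE (Pow {1..Kw}) (\<lambda>T. {..<2 ^ b n (card T)})"
        using enc1 unfolding FV_def by blast
      show "inj_on enc {1..num_msgs n R}" by (rule enc2)
      show "\<And>i. i \<in> {1..Kw} \<Longrightarrow> cenc i ` PiE ({1..D} \<times> {T\<in>Pow {1..Kw}. i \<in> T}) (\<lambda>(d', T). {..<2 ^ b n (card T)}) \<subseteq> {1..num_msgs n M}"
        using cenc by blast
      show "\<And>i. i \<in> {1..Kw} \<Longrightarrow> inj_on (cenc i) (PiE ({1..D} \<times> {T\<in>Pow {1..Kw}. i \<in> T}) (\<lambda>(d', T). {..<2 ^ b n (card T)}))"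
        using cenc by blast
      show "(\<Sum>S\<in>{S\<in>Pow {1..Kw}. S \<noteq> {}}. lw n (card S - 1)) + Ks * ls n \<le> n" by (rule c3)
    qed
    interpret Mn: man Kw Ks D dw ds R M E n F "b n" "lw n" "ls n" enc cenc by (rule manI)
    have dd: "0 \<le> dw" "dw \<le> 1" "0 \<le> ds" "ds \<le> 1" using ds0 dsw dw1 by auto
    obtain f phi where fp: "\<forall>d\<in>demand_set (Kw+Ks) D. \<forall>w\<in>msg_set D n R. \<forall>t<n. length (f d w t) = F"
      "\<forall>d\<in>demand_set (Kw+Ks) D. error_prob Kw Ks D E n R Mn.g f phi d \<le> real (Kw+Ks) * Mn.TJ s"
      using Mn.man_result[OF s dd] by blast
    have TJb: "Mn.TJ s \<le> (\<Sum>S\<in>PS. G s n (card S - 1)) + real Ks * 2 powr (- (s * R * \<kappa>) * real n)"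
    proof -
      have "Mn.TJ s = (\<Sum>S\<in>PS. (real (2 ^ b n (card S - 1) :: nat) - 1) powr s * aw s ^ lw n (card S - 1))
            + (\<Sum>j\<in>{Kw+1..Kw+Ks}. (real (num_msgs n R + 1) - 1) powr s * as s ^ ls n)"
        unfolding Mn.TJ_def Mn.Js_def PS_def
        by (subst sum.Plus) (auto simp: Mn.Q_def Mn.aj_def Mn.lsl_def aw_def as_def comp_def)
      also have "\<dots> \<le> (\<Sum>S\<in>PS. G s n (card S - 1)) + (\<Sum>j\<in>{Kw+1..Kw+Ks}. 2 powr (- s * (real n * R) * \<kappa>))"
        using weak_term[OF s saw] strong_term[OF s sas] PScard by (intro add_mono sum_mono) auto
      also have "(\<Sum>j\<in>{Kw+1..Kw+Ks}. 2 powr (- s * (real n * R) * \<kappa>)) = real Ks * 2 powr (- (s * R * \<kappa>) * real n)"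
        by (simp add: mult_ac)
      finally show ?thesis .
    qed
    have errb: "\<forall>d\<in>demand_set (Kw+Ks) D. error_prob Kw Ks D E n R Mn.g f phi d < \<epsilon>"
    proof
      fix d assume d: "d \<in> demand_set (Kw+Ks) D"
      have "error_prob Kw Ks D E n R Mn.g f phi d \<le> real (Kw+Ks) * Mn.TJ s" using fp(2) d by blast
      also have "\<dots> \<le> e n" unfolding e_def using TJb by (intro mult_left_mono) auto
      finally show "error_prob Kw Ks D E n R Mn.g f phi d < \<epsilon>" using en by simp
    qed
    have grange: "\<forall>i\<in>{1..Kw}. \<forall>w\<in>msg_set D n R. Mn.g i w \<in> {1..num_msgs n M}"
      using Mn.g_range by blast
    show "\<exists>n>0. \<exists>g f phi. (\<forall>i\<in>{1..Kw}. \<forall>w\<in>msg_set D n R. g i w \<in> {1..num_msgs n M}) \<and>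
        (\<forall>d\<in>demand_set (Kw + Ks) D. \<forall>w\<in>msg_set D n R. \<forall>t<n. length (f d w t) = F) \<and>
        (\<forall>d\<in>demand_set (Kw + Ks) D. error_prob Kw Ks D E n R g f phi d < \<epsilon>)"
      using n0 grange fp(1) errb by blast
  qed
qed

end

theorem proposition4:
  fixes Kw Ks D F :: nat and dw ds M :: real and E :: "nat set pmf" and lam :: "nat \<Rightarrow> real"
  assumes "1 \<le> Kw" and "1 \<le> Ks" and "Kw + Ks \<le> D" and "1 \<le> F"
    and "0 < ds" and "ds \<le> dw" and "dw < 1"
    and "valid_erasure_law Kw Ks dw ds E"
    and "0 \<le> M" and "M \<le> M_sep Kw Ks D F dw ds Kw"
    and "\<forall>t\<in>{0..Kw}. 0 \<le> lam t"
    and "(\<Sum>t=0..Kw. lam t) = 1"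
    and "(\<Sum>t=0..Kw. lam t * M_sep Kw Ks D F dw ds t) = M"
  shows "ereal (\<Sum>t=0..Kw. lam t * R_sep Kw Ks F dw ds t) \<le> capacity Kw Ks D F E M"
proof -
  define L where "L = (\<Sum>t=0..Kw. lam t * R_sep Kw Ks F dw ds t)"
  define C where "C = capacity Kw Ks D F E M"
  have P: "params Kw Ks D F dw ds M E lam \<eta>" if "0 < \<eta>" "\<eta> < 1/2" for \<eta>
    using assms that by unfold_locales auto
  have ach: "ereal ((1 - 2 * \<eta>) * L) \<le> C" if "0 < \<eta>" "\<eta> < 1/2" for \<eta>
  proof -
    interpret Pa: params Kw Ks D F dw ds M E lam \<eta> by (rule P[OF that])
    have "achievable Kw Ks D F E Pa.R M" by (rule Pa.achievable_R)
    moreover have "Pa.R = (1 - 2 * \<eta>) * L" unfolding Pa.R_def Pa.L_def Pa.Rt_def L_def ..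
    ultimately have "ereal ((1 - 2 * \<eta>) * L) \<in> {ereal R | R. achievable Kw Ks D F E R M}" by auto
    then show ?thesis unfolding C_def capacity_def by (rule Sup_upper)
  qed
  have Lpos: "0 < L"
  proof -
    interpret Pa: params Kw Ks D F dw ds M E lam "1/4" by (rule P) auto
    show ?thesis using Pa.L_pos unfolding Pa.L_def Pa.Rt_def L_def .
  qed
  have "ereal L \<le> C"
  proof (rule ccontr)
    assume "\<not> ereal L \<le> C"
    then have lt: "C < ereal L" by simp
    have "ereal ((1 - 2 * (1/4)) * L) \<le> C" by (rule ach) auto
    then have "C \<noteq> -\<infinity>" by auto
    moreover have "C \<noteq> \<infinity>" using lt by auto
    ultimately obtain c where c: "C = ereal c" by (cases C) auto
    then have cL: "c < L" using lt by simp
    define \<eta> where "\<eta> = min (1/4) ((L - c) / (4 * L))"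
    have e0: "0 < \<eta>" unfolding \<eta>_def using cL Lpos by simp
    have e1: "\<eta> < 1/2" unfolding \<eta>_def by simp
    have "\<eta> \<le> (L - c) / (4 * L)" unfolding \<eta>_def by simp
    then have "\<eta> * L \<le> ((L - c) / (4 * L)) * L" using Lpos by (intro mult_right_mono) auto
    also have "\<dots> = (L - c) / 4" using Lpos by simp
    finally have "\<eta> * L \<le> (L - c) / 4" .
    then have "c < (1 - 2 * \<eta>) * L" using cL by (simp add: algebra_simps)
    moreover have "ereal ((1 - 2 * \<eta>) * L) \<le> C" by (rule ach[OF e0 e1])
    ultimately show False using c by simp
  qed
  then show ?thesis unfolding L_def C_def .
qed


end
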